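(* Consider units $i=1,\dots,n$ in the setting described in the context, and suppose: (Independence) $(Y_i(q,t),T_i(q))\perp Q_i\mid X_i$ for all $q,t\in\{0,1\}$; (Exclusion) $\mathbb{P}(Y_i(1,t)=Y_i(0,t)\mid X_i)=1$ a.s. for $t\in\{0,1\}$; (Relevance) $\mathbb{P}[T_i(1)\neq T_i(0)\mid X_i]>0$ a.s.; (Monotonicity) $\mathbb{P}[T_i(1)\geq T_i(0)\mid X_i]=1$ a.s. or $\mathbb{P}[T_i(1)\leq T_i(0)\mid X_i]=1$ a.s.; and (Group sizes) $m_g\geq 2$ and $n_g-m_g\geq 2$ for all $g=1,\dots,G$. Then $$\beta^{\mathrm{TSLS}}=\frac{\sum_{g=1}^G \frac{n_g}{n}\,\pi(x_g)^2\,\tilde V_g\,\tau(x_g)+\frac1n\sum_{i=1}^n\mathbb{E}[u_i\varepsilon_i\mid Q_i,X_i]P_{ii}}{\sum_{g=1}^G \frac{n_g}{n}\,\pi(x_g)^2\,\tilde V_g+\frac1n\sum_{i=1}^n\mathbb{E}[u_i^2\mid Q_i,X_i]P_{ii}},$$ where $\tilde V_g=\frac{m_g}{n_g}\left(1-\frac{m_g}{n_g}\right)$, $u_i=T_i-\mathbb{E}[T_i\mid Q_i,X_i]$, $\varepsilon_i=Y_i-\mathbb{E}[Y_i\mid Q_i,X_i]$, and $P_{ii}=\sum_{g=1}^G\frac{1}{n_g}W_{ig}\frac{(Z_{ig}-m_g/n_g)^2}{\tilde V_g}$ is the $i$-th diagonal element of $P$.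
   Context: Units $i=1,\dots,n$ are i.i.d. Each has a binary instrument $Q_i\in\{0,1\}$, a covariate vector $X_i$ taking values in a finite set $\{x_1,\dots,x_G\}$ of $G$ distinct values, potential treatments $T_i(q)\in\{0,1\}$ for $q\in\{0,1\}$, potential outcomes $Y_i(q,t)$ for $q,t\in\{0,1\}$; the observed treatment is $T_i=T_i(Q_i)$ and the observed outcome is $Y_i=Y_i(Q_i,T_i)$. Under exclusion write $Y_i(t)=Y_i(0,t)$. Let $\pi(x_g)=\mathbb{P}[T_i(1)\neq T_i(0)\mid X_i=x_g]$ and $\tau(x_g)=\mathbb{E}[Y_i(1)-Y_i(0)\mid T_i(1)\neq T_i(0),X_i=x_g]$. Let $Q=(Q_1,\dots,Q_n)$, $X=(X_1,\dots,X_n)$, $Y=(Y_1,\dots,Y_n)'$, $T=(T_1,\dots,T_n)'$. Let $W$ be the $n\times G$ matrix with $W_{ig}=\mathbb{1}[X_i=x_g]$ and $Z$ the $n\times G$ matrix with $Z_{ig}=Q_i\mathbb{1}[X_i=x_g]$; $n_g=\sum_iW_{ig}$, $m_g=\sum_i Z_{ig}$. Let $M_W=I_n-W(W'W)^{-1}W'$, $P=M_WZ(Z'M_WZ)^{-1}Z'M_W$, and $\beta^{\mathrm{TSLS}}=\mathbb{E}[T'PY\mid Q,X]/\mathbb{E}[T'PT\mid Q,X]$. *)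

theory Defs
  imports "HOL-Analysis.Analysis" "HOL-Probability.Probability"
begin

text \<open>All conditioning variables (instrument, covariates) are discrete, so conditional
  expectations/probabilities given them are elementary: conditioning on the event
  that they take their realized values.\<close>

definition condE :: "'a measure \<Rightarrow> 'a set \<Rightarrow> ('a \<Rightarrow> real) \<Rightarrow> real" where
  "condE N A f = (\<integral>\<omega>. indicator A \<omega> * f \<omega> \<partial>N) / measure N A"

definition condP :: "'a measure \<Rightarrow> 'a set \<Rightarrow> 'a set \<Rightarrow> real" where
  "condP N A B = measure N (A \<inter> B) / measure N A"

text \<open>A single unit lives on a probability space M. Q: instrument (True = 1),
  Tp q: potential treatment T(q) (True = 1), Yp q t: potential outcome Y(q,t),
  X: covariate with values in the type 'x.\<close>

definition Tobs :: "('a \<Rightarrow> bool) \<Rightarrow> (bool \<Rightarrow> 'a \<Rightarrow> bool) \<Rightarrow> 'a \<Rightarrow> real" where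
  "Tobs Q Tp \<omega> = (if Tp (Q \<omega>) \<omega> then 1 else 0)"

definition Yobs :: "('a \<Rightarrow> bool) \<Rightarrow> (bool \<Rightarrow> 'a \<Rightarrow> bool) \<Rightarrow> (bool \<Rightarrow> bool \<Rightarrow> 'a \<Rightarrow> real) \<Rightarrow> 'a \<Rightarrow> real" where
  "Yobs Q Tp Yp \<omega> = Yp (Q \<omega>) (Tp (Q \<omega>) \<omega>) \<omega>"

definition Xcell :: "'a measure \<Rightarrow> ('a \<Rightarrow> 'x) \<Rightarrow> 'x \<Rightarrow> 'a set" where
  "Xcell M X x = {\<omega> \<in> space M. X \<omega> = x}"

definition compliers :: "'a measure \<Rightarrow> (bool \<Rightarrow> 'a \<Rightarrow> bool) \<Rightarrow> 'a set" where
  "compliers M Tp = {\<omega> \<in> space M. Tp True \<omega> \<noteq> Tp False \<omega>}"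

definition pi_x :: "'a measure \<Rightarrow> ('a \<Rightarrow> 'x) \<Rightarrow> (bool \<Rightarrow> 'a \<Rightarrow> bool) \<Rightarrow> 'x \<Rightarrow> real" where
  "pi_x M X Tp x = condP M (Xcell M X x) (compliers M Tp)"

text \<open>tau(x) = E[Y(1) - Y(0) | T(1) ~= T(0), X = x], with Y(t) = Y(0,t)\<close>
definition tau_x :: "'a measure \<Rightarrow> ('a \<Rightarrow> 'x) \<Rightarrow> (bool \<Rightarrow> 'a \<Rightarrow> bool) \<Rightarrow> (bool \<Rightarrow> bool \<Rightarrow> 'a \<Rightarrow> real) \<Rightarrow> 'x \<Rightarrow> real" where
  "tau_x M X Tp Yp x = condE M (Xcell M X x \<inter> compliers M Tp) (\<lambda>\<omega>. Yp False True \<omega> - Yp False False \<omega>)"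

definition SampM :: "'a measure \<Rightarrow> ('n \<Rightarrow> 'a) measure" where
  "SampM M = PiM UNIV (\<lambda>_. M)"

definition QXevent :: "'a measure \<Rightarrow> ('a \<Rightarrow> bool) \<Rightarrow> ('a \<Rightarrow> 'x) \<Rightarrow> ('g \<Rightarrow> 'x)
    \<Rightarrow> ('n \<Rightarrow> bool) \<Rightarrow> ('n \<Rightarrow> 'g) \<Rightarrow> ('n \<Rightarrow> 'a) set" where
  "QXevent M Q X xs qv gv = {\<omega> \<in> space (SampM M). \<forall>i. Q (\<omega> i) = qv i \<and> X (\<omega> i) = xs (gv i)}"

definition QXevent_i :: "'a measure \<Rightarrow> ('a \<Rightarrow> bool) \<Rightarrow> ('a \<Rightarrow> 'x) \<Rightarrow> ('g \<Rightarrow> 'x)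
    \<Rightarrow> ('n \<Rightarrow> bool) \<Rightarrow> ('n \<Rightarrow> 'g) \<Rightarrow> 'n \<Rightarrow> ('n \<Rightarrow> 'a) set" where
  "QXevent_i M Q X xs qv gv i = {\<omega> \<in> space (SampM M). Q (\<omega> i) = qv i \<and> X (\<omega> i) = xs (gv i)}"

definition Wmat :: "('n \<Rightarrow> 'g) \<Rightarrow> real^'g^'n" where
  "Wmat gv = (\<chi> i g. if gv i = g then 1 else 0)"

definition Zmat :: "('n \<Rightarrow> bool) \<Rightarrow> ('n \<Rightarrow> 'g) \<Rightarrow> real^'g^'n" where
  "Zmat qv gv = (\<chi> i g. if qv i \<and> gv i = g then 1 else 0)"

definition n_g :: "('n::finite \<Rightarrow> 'g) \<Rightarrow> 'g \<Rightarrow> nat" where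
  "n_g gv g = card {i. gv i = g}"

definition m_g :: "('n::finite \<Rightarrow> bool) \<Rightarrow> ('n \<Rightarrow> 'g) \<Rightarrow> 'g \<Rightarrow> nat" where
  "m_g qv gv g = card {i. qv i \<and> gv i = g}"

definition MWmat :: "real^'g^'n \<Rightarrow> real^'n^'n" where
  "MWmat W = mat 1 - W ** matrix_inv (transpose W ** W) ** transpose W"

definition Pmat :: "real^'g^'n \<Rightarrow> real^'g^'n \<Rightarrow> real^'n^'n" where
  "Pmat W Z = MWmat W ** Z ** matrix_inv (transpose Z ** MWmat W ** Z) ** transpose Z ** MWmat W"

definition Tvec :: "('a \<Rightarrow> bool) \<Rightarrow> (bool \<Rightarrow> 'a \<Rightarrow> bool) \<Rightarrow> ('n \<Rightarrow> 'a) \<Rightarrow> real^'n" where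
  "Tvec Q Tp \<omega> = (\<chi> i. Tobs Q Tp (\<omega> i))"

definition Yvec :: "('a \<Rightarrow> bool) \<Rightarrow> (bool \<Rightarrow> 'a \<Rightarrow> bool) \<Rightarrow> (bool \<Rightarrow> bool \<Rightarrow> 'a \<Rightarrow> real) \<Rightarrow> ('n \<Rightarrow> 'a) \<Rightarrow> real^'n" where
  "Yvec Q Tp Yp \<omega> = (\<chi> i. Yobs Q Tp Yp (\<omega> i))"

definition beta_TSLS :: "'a measure \<Rightarrow> ('a \<Rightarrow> bool) \<Rightarrow> ('a \<Rightarrow> 'x) \<Rightarrow> (bool \<Rightarrow> 'a \<Rightarrow> bool)
    \<Rightarrow> (bool \<Rightarrow> bool \<Rightarrow> 'a \<Rightarrow> real) \<Rightarrow> ('g::finite \<Rightarrow> 'x) \<Rightarrow> ('n::finite \<Rightarrow> bool) \<Rightarrow> ('n \<Rightarrow> 'g) \<Rightarrow> real" where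
  "beta_TSLS M Q X Tp Yp xs qv gv =
     (let E = QXevent M Q X xs qv gv; P = Pmat (Wmat gv) (Zmat qv gv) in
      condE (SampM M) E (\<lambda>\<omega>. Tvec Q Tp \<omega> \<bullet> (P *v Yvec Q Tp Yp \<omega>))
      / condE (SampM M) E (\<lambda>\<omega>. Tvec Q Tp \<omega> \<bullet> (P *v Tvec Q Tp \<omega>)))"

definition E_u_eps :: "'a measure \<Rightarrow> ('a \<Rightarrow> bool) \<Rightarrow> ('a \<Rightarrow> 'x) \<Rightarrow> (bool \<Rightarrow> 'a \<Rightarrow> bool)
    \<Rightarrow> (bool \<Rightarrow> bool \<Rightarrow> 'a \<Rightarrow> real) \<Rightarrow> ('g \<Rightarrow> 'x) \<Rightarrow> ('n \<Rightarrow> bool) \<Rightarrow> ('n \<Rightarrow> 'g) \<Rightarrow> 'n \<Rightarrow> real" where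
  "E_u_eps M Q X Tp Yp xs qv gv i =
     (let D = QXevent_i M Q X xs qv gv i;
          T_i = (\<lambda>\<omega>. Tobs Q Tp (\<omega> i)); Y_i = (\<lambda>\<omega>. Yobs Q Tp Yp (\<omega> i)) in
      condE (SampM M) D (\<lambda>\<omega>. (T_i \<omega> - condE (SampM M) D T_i) * (Y_i \<omega> - condE (SampM M) D Y_i)))"

definition E_u_sq :: "'a measure \<Rightarrow> ('a \<Rightarrow> bool) \<Rightarrow> ('a \<Rightarrow> 'x) \<Rightarrow> (bool \<Rightarrow> 'a \<Rightarrow> bool)
    \<Rightarrow> ('g \<Rightarrow> 'x) \<Rightarrow> ('n \<Rightarrow> bool) \<Rightarrow> ('n \<Rightarrow> 'g) \<Rightarrow> 'n \<Rightarrow> real" where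
  "E_u_sq M Q X Tp xs qv gv i =
     (let D = QXevent_i M Q X xs qv gv i; T_i = (\<lambda>\<omega>. Tobs Q Tp (\<omega> i)) in
      condE (SampM M) D (\<lambda>\<omega>. (T_i \<omega> - condE (SampM M) D T_i)^2))"

end

theory Submission
  imports Defs
begin

lemma matrix_inv_eqI:
  fixes A :: "real^'n^'n"
  assumes "A ** B = mat 1" "B ** A = mat 1"
  shows "matrix_inv A = B"
proof -
  have ex: "\<exists>C. A ** C = mat 1 \<and> C ** A = mat 1" using assms by blast
  define C where "C = matrix_inv A"
  have C: "A ** C = mat 1 \<and> C ** A = mat 1"
    unfolding C_def matrix_inv_def by (rule someI_ex[OF ex])
  have "C = C ** (A ** B)" using assms by (simp add: matrix_mul_rid)
  also have "\<dots> = (C ** A) ** B" by (simp add: matrix_mul_assoc)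
  also have "\<dots> = B" using C by (simp add: matrix_mul_lid)
  finally show ?thesis unfolding C_def .
qed

definition diagm :: "('g::finite \<Rightarrow> real) \<Rightarrow> real^'g^'g" where
  "diagm d = (\<chi> g h. if g = h then d g else 0)"

lemma diagm_mul: "diagm d ** diagm e = diagm (\<lambda>g. d g * e g)"
  unfolding diagm_def matrix_matrix_mult_def
  by (simp add: vec_eq_iff if_distrib[of "\<lambda>x. x * _"] sum.delta cong: if_cong)

lemma diagm_one: "(\<And>g. d g = 1) \<Longrightarrow> diagm d = mat 1"
  unfolding diagm_def mat_def by (simp add: vec_eq_iff)

lemma matrix_inv_diagm:
  assumes "\<And>g. d g \<noteq> 0"
  shows "matrix_inv (diagm d) = diagm (\<lambda>g. 1 / d g)"
  by (rule matrix_inv_eqI) (simp_all add: diagm_mul diagm_one assms)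

lemma real_card_sum: "real (card {i::'n::finite. P i}) = (\<Sum>i\<in>UNIV. if P i then 1 else 0)"
  by (simp add: sum.If_cases)

lemma WtW: "transpose (Wmat gv) ** Wmat (gv::'n::finite \<Rightarrow> 'g::finite) = diagm (\<lambda>g. real (n_g gv g))"
  unfolding diagm_def matrix_matrix_mult_def transpose_def Wmat_def n_g_def
  by (auto simp: vec_eq_iff real_card_sum intro!: sum.cong sum.neutral)

lemma MW_entry:
  fixes gv :: "'n::finite \<Rightarrow> 'g::finite"
  assumes pos: "\<And>g. n_g gv g > 0"
  shows "MWmat (Wmat gv) $ i $ j = (if i = j then 1 else 0) - (if gv i = gv j then 1 / real (n_g gv (gv i)) else 0)"
proof -
  have "matrix_inv (transpose (Wmat gv) ** Wmat gv) = diagm (\<lambda>g. 1 / real (n_g gv g))"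
    unfolding WtW using pos by (intro matrix_inv_diagm) (simp add: less_not_refl2 )
  then show ?thesis
    unfolding MWmat_def
    by (simp add: matrix_matrix_mult_def transpose_def Wmat_def diagm_def mat_def
         if_distrib[of "\<lambda>x. x * _"] sum.delta cong: if_cong)
qed

lemma mm_entry: "(A ** B) $ i $ j = (\<Sum>k\<in>UNIV. A $ i $ k * B $ k $ j)"
  by (simp add: matrix_matrix_mult_def)

lemma MWZ_entry:
  fixes gv :: "'n::finite \<Rightarrow> 'g::finite"
  assumes pos: "\<And>g. n_g gv g > 0"
  shows "(MWmat (Wmat gv) ** Zmat qv gv) $ i $ g =
     (if gv i = g then (if qv i then 1 else 0) - real (m_g qv gv g) / real (n_g gv g) else 0)"
proof -
  have "(MWmat (Wmat gv) ** Zmat qv gv) $ i $ g =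
     (\<Sum>j\<in>UNIV. ((if i = j then 1 else 0) - (if gv i = gv j then 1 / real (n_g gv (gv i)) else 0))
         * (if qv j \<and> gv j = g then 1 else 0))"
    by (simp add: matrix_matrix_mult_def MW_entry[OF pos] Zmat_def)
  also have "\<dots> = (\<Sum>j\<in>UNIV. (if i = j then 1 else 0) * (if qv j \<and> gv j = g then 1 else 0))
      - (\<Sum>j\<in>UNIV. (if gv i = gv j then 1 / real (n_g gv (gv i)) else 0) * (if qv j \<and> gv j = g then 1 else 0))"
    by (simp add: left_diff_distrib sum_subtractf)
  also have "(\<Sum>j\<in>UNIV. (if i = j then 1 else 0) * (if qv j \<and> gv j = g then 1 else (0::real)))
     = (if qv i \<and> gv i = g then 1 else 0)"
    by (simp add: if_distrib[of "\<lambda>x. x * _"] sum.delta cong: if_cong)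
  also have "(\<Sum>j\<in>UNIV. (if gv i = gv j then 1 / real (n_g gv (gv i)) else 0) * (if qv j \<and> gv j = g then 1 else 0))
     = (if gv i = g then real (m_g qv gv g) / real (n_g gv g) else 0)"
  proof (cases "gv i = g")
    case True
    then have "(\<Sum>j\<in>UNIV. (if gv i = gv j then 1 / real (n_g gv (gv i)) else 0) * (if qv j \<and> gv j = g then 1 else 0))
       = (\<Sum>j\<in>UNIV. 1 / real (n_g gv g) * (if qv j \<and> gv j = g then 1 else 0))"
      by (intro sum.cong) auto
    also have "\<dots> = real (m_g qv gv g) / real (n_g gv g)"
      by (simp add: sum_divide_distrib[symmetric] m_g_def real_card_sum)
    finally show ?thesis using True by simp
  next
    case False
    then show ?thesis by (intro trans[OF sum.neutral]) auto
  qed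
  finally show ?thesis by auto
qed

lemma MW_sym:
  fixes gv :: "'n::finite \<Rightarrow> 'g::finite"
  assumes pos: "\<And>g. n_g gv g > 0"
  shows "transpose (MWmat (Wmat gv)) = MWmat (Wmat gv)"
  by (auto simp: vec_eq_iff transpose_def MW_entry[OF pos])

lemma ZMWZ:
  fixes gv :: "'n::finite \<Rightarrow> 'g::finite"
  assumes pos: "\<And>g. n_g gv g > 0"
  shows "transpose (Zmat qv gv) ** MWmat (Wmat gv) ** Zmat qv gv =
     diagm (\<lambda>g. real (m_g qv gv g) * (1 - real (m_g qv gv g) / real (n_g gv g)))"
proof -
  have "(transpose (Zmat qv gv) ** MWmat (Wmat gv) ** Zmat qv gv) $ g $ h =
     (if g = h then real (m_g qv gv g) * (1 - real (m_g qv gv g) / real (n_g gv g)) else 0)" for g h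
  proof -
    have "(transpose (Zmat qv gv) ** MWmat (Wmat gv) ** Zmat qv gv) $ g $ h =
       (\<Sum>i\<in>UNIV. (if qv i \<and> gv i = g then 1 else 0) * ((MWmat (Wmat gv) ** Zmat qv gv) $ i $ h))"
      apply (simp add: mm_entry transpose_def Zmat_def sum_distrib_left sum_distrib_right)
      apply (subst sum.swap) apply (simp add: mult_ac)
      done
    also have "\<dots> = (\<Sum>i\<in>UNIV. if qv i \<and> gv i = g then (if g = h then 1 - real (m_g qv gv g) / real (n_g gv g) else 0) else 0)"
      by (intro sum.cong) (auto simp: MWZ_entry[OF pos])
    also have "\<dots> = (if g = h then real (m_g qv gv g) * (1 - real (m_g qv gv g) / real (n_g gv g)) else 0)"
      by (simp add: sum.If_cases m_g_def)
    finally show ?thesis .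
  qed
  then show ?thesis by (simp add: vec_eq_iff diagm_def)
qed

lemma P_entry:
  fixes gv :: "'n::finite \<Rightarrow> 'g::finite"
  assumes pos: "\<And>g. 0 < m_g qv gv g" "\<And>g. m_g qv gv g < n_g gv g"
  shows "Pmat (Wmat gv) (Zmat qv gv) $ i $ j =
     (if gv i = gv j then
        ((if qv i then 1 else 0) - real (m_g qv gv (gv i)) / real (n_g gv (gv i))) *
        ((if qv j then 1 else 0) - real (m_g qv gv (gv i)) / real (n_g gv (gv i))) /
        (real (m_g qv gv (gv i)) * (1 - real (m_g qv gv (gv i)) / real (n_g gv (gv i))))
      else 0)"
proof -
  have npos: "\<And>g. n_g gv g > 0" using pos by (metis less_trans)
  define c where "c g = real (m_g qv gv g) * (1 - real (m_g qv gv g) / real (n_g gv g))" for g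
  have c0: "c g \<noteq> 0" for g
  proof -
    have "real (m_g qv gv g) < real (n_g gv g)" using pos(2)[of g] by simp
    then have "real (m_g qv gv g) / real (n_g gv g) < 1" using npos[of g] by simp
    then show ?thesis unfolding c_def using pos(1)[of g] pos(2)[of g] by simp
  qed
  define A where "A = MWmat (Wmat gv) ** Zmat qv gv"
  have inv: "matrix_inv (transpose (Zmat qv gv) ** MWmat (Wmat gv) ** Zmat qv gv) = diagm (\<lambda>g. 1 / c g)"
    unfolding ZMWZ[OF npos] c_def[symmetric] by (rule matrix_inv_diagm[OF c0])
  have tA: "transpose A = transpose (Zmat qv gv) ** MWmat (Wmat gv)"
    unfolding A_def matrix_transpose_mul MW_sym[OF npos] ..
  have "Pmat (Wmat gv) (Zmat qv gv) = (A ** diagm (\<lambda>g. 1 / c g)) ** transpose A"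
    unfolding Pmat_def inv tA unfolding A_def by (simp add: matrix_mul_assoc)
  then have "Pmat (Wmat gv) (Zmat qv gv) $ i $ j = (\<Sum>g\<in>UNIV. A $ i $ g * A $ j $ g / c g)"
    by (simp add: mm_entry diagm_def transpose_def if_distrib[of "\<lambda>x. _ * x"] sum.delta cong: if_cong)
  also have "\<dots> = (\<Sum>g\<in>UNIV. if g = gv i then A $ i $ g * A $ j $ g / c g else 0)"
    by (intro sum.cong) (auto simp: A_def MWZ_entry[OF npos])
  also have "\<dots> = A $ i $ gv i * A $ j $ gv i / c (gv i)"
    by simp
  finally show ?thesis
    by (auto simp: A_def MWZ_entry[OF npos] c_def)
qed

definition Aent :: "('n \<Rightarrow> bool) \<Rightarrow> ('n::finite \<Rightarrow> 'g::finite) \<Rightarrow> 'n \<Rightarrow> 'g \<Rightarrow> real" where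
  "Aent qv gv i g = (if gv i = g then (if qv i then 1 else 0) - real (m_g qv gv g) / real (n_g gv g) else 0)"

definition cc :: "('n \<Rightarrow> bool) \<Rightarrow> ('n::finite \<Rightarrow> 'g::finite) \<Rightarrow> 'g \<Rightarrow> real" where
  "cc qv gv g = real (m_g qv gv g) * (1 - real (m_g qv gv g) / real (n_g gv g))"

lemma P_sum:
  fixes gv :: "'n::finite \<Rightarrow> 'g::finite"
  assumes pos: "\<And>g. 0 < m_g qv gv g" "\<And>g. m_g qv gv g < n_g gv g"
  shows "Pmat (Wmat gv) (Zmat qv gv) $ i $ j = (\<Sum>g\<in>UNIV. Aent qv gv i g * Aent qv gv j g / cc qv gv g)"
proof -
  have npos: "\<And>g. n_g gv g > 0" using pos by (metis less_trans)
  define c where "c g = real (m_g qv gv g) * (1 - real (m_g qv gv g) / real (n_g gv g))" for g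
  have c0: "c g \<noteq> 0" for g
  proof -
    have "real (m_g qv gv g) < real (n_g gv g)" using pos(2)[of g] by simp
    then have "real (m_g qv gv g) / real (n_g gv g) < 1" using npos[of g] by simp
    then show ?thesis unfolding c_def using pos(1)[of g] pos(2)[of g] by simp
  qed
  define A where "A = MWmat (Wmat gv) ** Zmat qv gv"
  have inv: "matrix_inv (transpose (Zmat qv gv) ** MWmat (Wmat gv) ** Zmat qv gv) = diagm (\<lambda>g. 1 / c g)"
    unfolding ZMWZ[OF npos] c_def[symmetric] by (rule matrix_inv_diagm[OF c0])
  have tA: "transpose A = transpose (Zmat qv gv) ** MWmat (Wmat gv)"
    unfolding A_def matrix_transpose_mul MW_sym[OF npos] ..
  have "Pmat (Wmat gv) (Zmat qv gv) = (A ** diagm (\<lambda>g. 1 / c g)) ** transpose A"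
    unfolding Pmat_def inv tA unfolding A_def by (simp add: matrix_mul_assoc)
  then have "Pmat (Wmat gv) (Zmat qv gv) $ i $ j = (\<Sum>g\<in>UNIV. A $ i $ g * A $ j $ g / c g)"
    by (simp add: mm_entry diagm_def transpose_def if_distrib[of "\<lambda>x. _ * x"] sum.delta cong: if_cong)
  then show ?thesis
    by (simp add: A_def MWZ_entry[OF npos] Aent_def c_def cc_def)
qed

lemma sumA_lin:
  fixes gv :: "'n::finite \<Rightarrow> 'g::finite"
  assumes npos: "n_g gv g > 0"
  shows "(\<Sum>i\<in>UNIV. Aent qv gv i g * (a (gv i) + (if qv i then d (gv i) else 0))) = d g * cc qv gv g"
proof -
  let ?n = "real (n_g gv g)" and ?m = "real (m_g qv gv g)"
  have "(\<Sum>i\<in>UNIV. Aent qv gv i g * (a (gv i) + (if qv i then d (gv i) else 0)))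
     = (\<Sum>i\<in>UNIV. (if qv i \<and> gv i = g then (1 - ?m / ?n) * (a g + d g) else 0)
                 + (if \<not> qv i \<and> gv i = g then (- ?m / ?n) * a g else 0))"
    by (intro sum.cong) (auto simp: Aent_def)
  also have "\<dots> = ?m * ((1 - ?m / ?n) * (a g + d g)) + real (card {i. \<not> qv i \<and> gv i = g}) * ((- ?m / ?n) * a g)"
    by (simp add: sum.distrib sum.If_cases m_g_def)
  also have "card {i. \<not> qv i \<and> gv i = g} = n_g gv g - m_g qv gv g"
  proof -
    have "{i. gv i = g} = {i. qv i \<and> gv i = g} \<union> {i. \<not> qv i \<and> gv i = g}" by auto
    then have "n_g gv g = m_g qv gv g + card {i. \<not> qv i \<and> gv i = g}"
      unfolding n_g_def m_g_def by (simp add: card_Un_disjoint[symmetric] disjoint_iff)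
    then show ?thesis by simp
  qed
  also have "real (n_g gv g - m_g qv gv g) = ?n - ?m"
  proof -
    have "m_g qv gv g \<le> n_g gv g" unfolding m_g_def n_g_def by (rule card_mono) auto
    then show ?thesis by simp
  qed
  also have "?m * ((1 - ?m / ?n) * (a g + d g)) + (?n - ?m) * ((- ?m / ?n) * a g) = d g * cc qv gv g"
    using npos by (simp add: cc_def field_simps)
  finally show ?thesis .
qed

lemma quad:
  fixes gv :: "'n::finite \<Rightarrow> 'g::finite"
  assumes pos: "\<And>g. 0 < m_g qv gv g" "\<And>g. m_g qv gv g < n_g gv g"
  shows "(\<Sum>i\<in>UNIV. \<Sum>j\<in>UNIV. Pmat (Wmat gv) (Zmat qv gv) $ i $ j *
            (a (gv i) + (if qv i then d (gv i) else 0)) * (b (gv j) + (if qv j then e (gv j) else 0)))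
       = (\<Sum>g\<in>UNIV. d g * e g * cc qv gv g)"
proof -
  have npos: "\<And>g. n_g gv g > 0" using pos by (metis less_trans)
  have c0: "cc qv gv g \<noteq> 0" for g
  proof -
    have "real (m_g qv gv g) < real (n_g gv g)" using pos(2)[of g] by simp
    then have "real (m_g qv gv g) / real (n_g gv g) < 1" using npos[of g] by simp
    then show ?thesis unfolding cc_def using pos(1)[of g] pos(2)[of g] by simp
  qed
  let ?x = "\<lambda>i. a (gv i) + (if qv i then d (gv i) else 0)"
  let ?y = "\<lambda>j. b (gv j) + (if qv j then e (gv j) else 0)"
  have "(\<Sum>i\<in>UNIV. \<Sum>j\<in>UNIV. Pmat (Wmat gv) (Zmat qv gv) $ i $ j * ?x i * ?y j)
     = (\<Sum>i\<in>UNIV. \<Sum>j\<in>UNIV. \<Sum>g\<in>UNIV. (Aent qv gv i g * ?x i) * (Aent qv gv j g * ?y j) / cc qv gv g)"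
    by (intro sum.cong refl) (simp only: P_sum[OF pos] sum_distrib_right, intro sum.cong refl, simp)
  also have "\<dots> = (\<Sum>g\<in>UNIV. (\<Sum>i\<in>UNIV. Aent qv gv i g * ?x i) * (\<Sum>j\<in>UNIV. Aent qv gv j g * ?y j) / cc qv gv g)"
  proof -
    have "(\<Sum>i\<in>UNIV. \<Sum>j\<in>UNIV. \<Sum>g\<in>UNIV. (Aent qv gv i g * ?x i) * (Aent qv gv j g * ?y j) / cc qv gv g)
       = (\<Sum>i\<in>UNIV. \<Sum>g\<in>UNIV. \<Sum>j\<in>UNIV. (Aent qv gv i g * ?x i) * (Aent qv gv j g * ?y j) / cc qv gv g)"
      by (intro sum.cong refl sum.swap)
    also have "\<dots> = (\<Sum>g\<in>UNIV. \<Sum>i\<in>UNIV. \<Sum>j\<in>UNIV. (Aent qv gv i g * ?x i) * (Aent qv gv j g * ?y j) / cc qv gv g)"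
      by (rule sum.swap)
    also have "\<dots> = (\<Sum>g\<in>UNIV. (\<Sum>i\<in>UNIV. Aent qv gv i g * ?x i) * (\<Sum>j\<in>UNIV. Aent qv gv j g * ?y j) / cc qv gv g)"
      by (intro sum.cong refl) (simp only: sum_product sum_divide_distrib)
    finally show ?thesis .
  qed
  also have "\<dots> = (\<Sum>g\<in>UNIV. d g * e g * cc qv gv g)"
    by (intro sum.cong refl) (simp add: sumA_lin[OF npos] c0)
  finally show ?thesis .
qed

definition boxev :: "'a measure \<Rightarrow> ('n \<Rightarrow> 'a set) \<Rightarrow> ('n \<Rightarrow> 'a) set" where
  "boxev M A = {\<omega> \<in> space (SampM M). \<forall>k. \<omega> k \<in> A k}"

lemma boxev_sets:
  assumes "\<And>k. A k \<in> sets M"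
  shows "boxev M (A :: 'n::finite \<Rightarrow> 'a set) \<in> sets (SampM M)"
proof -
  have "boxev M A = (\<Inter>k. (\<lambda>\<omega>. \<omega> k) -` A k \<inter> space (SampM M))"
    unfolding boxev_def by auto
  also have "\<dots> \<in> sets (SampM M)"
    using assms unfolding SampM_def by (intro sets.finite_INT) (auto intro!: measurable_sets[OF measurable_component_singleton])
  finally show ?thesis .
qed

lemma box_integral:
  fixes h :: "'n::finite \<Rightarrow> 'a \<Rightarrow> real"
  assumes M: "prob_space M" and A: "\<And>k. A k \<in> sets M" and h: "\<And>k. integrable M (h k)"
  shows "(\<integral>\<omega>. indicator (boxev M A) \<omega> * (\<Prod>k\<in>UNIV. h k (\<omega> k)) \<partial>SampM M)
           = (\<Prod>k\<in>UNIV. \<integral>x. indicator (A k) x * h k x \<partial>M)"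
    and "integrable (SampM M) (\<lambda>\<omega>. indicator (boxev M A) \<omega> * (\<Prod>k\<in>UNIV. h k (\<omega> k)))"
proof -
  interpret P: product_prob_space "\<lambda>_::'n. M"
    using M by (simp add: product_prob_space_def product_prob_space_axioms_def product_sigma_finite_def prob_space_imp_sigma_finite)
  have int: "integrable M (\<lambda>x. indicator (A k) x * h k x)" for k
    using integrable_real_mult_indicator[OF A h, of k] by (simp add: mult.commute)
  have eq: "indicator (boxev M A) \<omega> * (\<Prod>k\<in>UNIV. h k (\<omega> k)) = (\<Prod>k\<in>UNIV. indicator (A k) (\<omega> k) * h k (\<omega> k))"
    if "\<omega> \<in> space (SampM M)" for \<omega>
    using that by (auto simp: boxev_def indicator_def prod.distrib)
  have "(\<integral>\<omega>. indicator (boxev M A) \<omega> * (\<Prod>k\<in>UNIV. h k (\<omega> k)) \<partial>SampM M)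
      = (\<integral>\<omega>. (\<Prod>k\<in>UNIV. indicator (A k) (\<omega> k) * h k (\<omega> k)) \<partial>SampM M)"
    by (rule Bochner_Integration.integral_cong) (simp_all add: eq)
  also have "\<dots> = (\<Prod>k\<in>UNIV. \<integral>x. indicator (A k) x * h k x \<partial>M)"
    unfolding SampM_def by (rule P.product_integral_prod) (auto intro: int)
  finally show "(\<integral>\<omega>. indicator (boxev M A) \<omega> * (\<Prod>k\<in>UNIV. h k (\<omega> k)) \<partial>SampM M)
           = (\<Prod>k\<in>UNIV. \<integral>x. indicator (A k) x * h k x \<partial>M)" .
  have "integrable (SampM M) (\<lambda>\<omega>. (\<Prod>k\<in>UNIV. indicator (A k) (\<omega> k) * h k (\<omega> k)))"
    unfolding SampM_def by (rule P.product_integrable_prod) (auto intro: int)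
  then show "integrable (SampM M) (\<lambda>\<omega>. indicator (boxev M A) \<omega> * (\<Prod>k\<in>UNIV. h k (\<omega> k)))"
    using Bochner_Integration.integrable_cong[OF refl, of "SampM M" "\<lambda>\<omega>. indicator (boxev M A) \<omega> * (\<Prod>k\<in>UNIV. h k (\<omega> k))" "\<lambda>\<omega>. (\<Prod>k\<in>UNIV. indicator (A k) (\<omega> k) * h k (\<omega> k))"] eq by simp
qed

lemma box_measure:
  fixes A :: "'n::finite \<Rightarrow> 'a set"
  assumes M: "prob_space M" and A: "\<And>k. A k \<in> sets M"
  shows "measure (SampM M) (boxev M A) = (\<Prod>k\<in>UNIV. measure M (A k))"
proof -
  interpret P: product_prob_space "\<lambda>_::'n. M"
    using M by (simp add: product_prob_space_def product_prob_space_axioms_def product_sigma_finite_def prob_space_imp_sigma_finite)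
  interpret S: prob_space "SampM M" unfolding SampM_def using M by (intro prob_space_PiM)
  interpret prob_space M by (rule M)
  have "measure (SampM M) (boxev M A) = (\<integral>\<omega>. indicator (boxev M A) \<omega> * (\<Prod>k\<in>UNIV. (\<lambda>k x. 1::real) k (\<omega> k)) \<partial>SampM M)"
    using boxev_sets[of A, OF A] by (simp add: Int_absorb2 sets.sets_into_space)
  also have "\<dots> = (\<Prod>k\<in>UNIV. measure M (A k))"
    by (subst box_integral[OF M A]) (auto simp: A)
  finally show ?thesis .
qed

lemma box_condE:
  fixes h :: "'n::finite \<Rightarrow> 'a \<Rightarrow> real"
  assumes M: "prob_space M" and A: "\<And>k. A k \<in> sets M" and h: "\<And>k. integrable M (h k)"
  shows "condE (SampM M) (boxev M A) (\<lambda>\<omega>. \<Prod>k\<in>UNIV. h k (\<omega> k)) = (\<Prod>k\<in>UNIV. condE M (A k) (h k))"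
  unfolding condE_def box_integral[OF M A h] box_measure[OF M A]
  by (simp add: prod_dividef)

lemma condE_one:
  assumes "prob_space M" "A \<in> sets M" "measure M A > 0"
  shows "condE M A (\<lambda>x. 1) = 1"
  using assms unfolding condE_def by simp

lemma box_single:
  fixes f :: "'a \<Rightarrow> real" and A :: "'n::finite \<Rightarrow> 'a set"
  assumes M: "prob_space M" and A: "\<And>k. A k \<in> sets M" and pos: "\<And>k. measure M (A k) > 0"
    and f: "integrable M f"
  shows "condE (SampM M) (boxev M A) (\<lambda>\<omega>. f (\<omega> i)) = condE M (A i) f"
    and "integrable (SampM M) (\<lambda>\<omega>. indicator (boxev M A) \<omega> * f (\<omega> i))"
proof -
  interpret prob_space M by (rule M)
  define h where "h = (\<lambda>k x. if k = i then f x else 1)"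
  have h: "integrable M (h k)" for k unfolding h_def using f by (cases "k = i") simp_all
  have ph: "(\<Prod>k\<in>UNIV. h k (\<omega> k)) = f (\<omega> i)" for \<omega>
    unfolding h_def by (simp add: prod.delta')
  have "condE (SampM M) (boxev M A) (\<lambda>\<omega>. \<Prod>k\<in>UNIV. h k (\<omega> k)) = (\<Prod>k\<in>UNIV. condE M (A k) (h k))"
    by (rule box_condE[OF M A h])
  also have "(\<Prod>k\<in>UNIV. condE M (A k) (h k)) = (\<Prod>k\<in>UNIV. if k = i then condE M (A i) f else 1)"
    by (intro prod.cong refl) (auto simp: h_def condE_one[OF M A pos] cong: if_cong)
  finally show "condE (SampM M) (boxev M A) (\<lambda>\<omega>. f (\<omega> i)) = condE M (A i) f"
    unfolding ph by (simp add: prod.delta')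
  show "integrable (SampM M) (\<lambda>\<omega>. indicator (boxev M A) \<omega> * f (\<omega> i))"
    using box_integral(2)[where A=A and h=h, OF M A h] unfolding ph .
qed

lemma box_pair:
  fixes f g :: "'a \<Rightarrow> real" and A :: "'n::finite \<Rightarrow> 'a set"
  assumes M: "prob_space M" and A: "\<And>k. A k \<in> sets M" and pos: "\<And>k. measure M (A k) > 0"
    and f: "integrable M f" and g: "integrable M g" and ij: "i \<noteq> j"
  shows "condE (SampM M) (boxev M A) (\<lambda>\<omega>. f (\<omega> i) * g (\<omega> j)) = condE M (A i) f * condE M (A j) g"
    and "integrable (SampM M) (\<lambda>\<omega>. indicator (boxev M A) \<omega> * (f (\<omega> i) * g (\<omega> j)))"
proof -
  interpret prob_space M by (rule M)
  define h where "h = (\<lambda>k x. if k = i then f x else if k = j then g x else 1)"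
  have h: "integrable M (h k)" for k unfolding h_def using f g by (cases "k = i"; cases "k = j") simp_all
  have ph: "(\<Prod>k\<in>UNIV. h k (\<omega> k)) = f (\<omega> i) * g (\<omega> j)" for \<omega>
  proof -
    have "(\<Prod>k\<in>UNIV. h k (\<omega> k)) = (\<Prod>k\<in>UNIV. (if k = i then f (\<omega> k) else 1) * (if k = j then g (\<omega> k) else 1))"
      by (intro prod.cong refl) (auto simp: h_def ij)
    then show ?thesis by (simp add: prod.distrib prod.delta')
  qed
  have "condE (SampM M) (boxev M A) (\<lambda>\<omega>. \<Prod>k\<in>UNIV. h k (\<omega> k)) = (\<Prod>k\<in>UNIV. condE M (A k) (h k))"
    by (rule box_condE[OF M A h])
  also have "(\<Prod>k\<in>UNIV. condE M (A k) (h k)) = (\<Prod>k\<in>UNIV. (if k = i then condE M (A i) f else 1) * (if k = j then condE M (A j) g else 1))"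
    by (intro prod.cong refl) (auto simp: h_def condE_one[OF M A pos] ij)
  finally show "condE (SampM M) (boxev M A) (\<lambda>\<omega>. f (\<omega> i) * g (\<omega> j)) = condE M (A i) f * condE M (A j) g"
    unfolding ph by (simp add: prod.distrib prod.delta')
  show "integrable (SampM M) (\<lambda>\<omega>. indicator (boxev M A) \<omega> * (f (\<omega> i) * g (\<omega> j)))"
    using box_integral(2)[where A=A and h=h, OF M A h] unfolding ph .
qed

lemma condE_sum:
  fixes G :: "'i \<Rightarrow> 'a \<Rightarrow> real"
  assumes "finite I" "\<And>i. i \<in> I \<Longrightarrow> integrable N (\<lambda>\<omega>. indicator E \<omega> * G i \<omega>)"
  shows "condE N E (\<lambda>\<omega>. \<Sum>i\<in>I. c i * G i \<omega>) = (\<Sum>i\<in>I. c i * condE N E (G i))"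
proof -
  have "(\<integral>\<omega>. indicator E \<omega> * (\<Sum>i\<in>I. c i * G i \<omega>) \<partial>N) = (\<integral>\<omega>. (\<Sum>i\<in>I. c i * (indicator E \<omega> * G i \<omega>)) \<partial>N)"
    by (simp add: sum_distrib_left mult_ac)
  also have "\<dots> = (\<Sum>i\<in>I. c i * (\<integral>\<omega>. indicator E \<omega> * G i \<omega> \<partial>N))"
    using assms by (subst Bochner_Integration.integral_sum) auto
  finally show ?thesis
    unfolding condE_def by (simp add: sum_divide_distrib)
qed

lemma unif_density:
  assumes M: "prob_space M" and C: "C \<in> sets M" and pos: "measure M C > 0"
  shows "uniform_measure M C = density M (\<lambda>x. ennreal (indicator C x / measure M C))"
proof -
  interpret prob_space M by (rule M)
  have "emeasure M C = ennreal (measure M C)" by (simp add: emeasure_eq_measure)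
  then have "(\<lambda>x. indicator C x / emeasure M C) = (\<lambda>x. ennreal (indicator C x / measure M C))"
    using pos by (auto simp: fun_eq_iff divide_ennreal ennreal_indicator[symmetric])
  then show ?thesis unfolding uniform_measure_def by simp
qed

lemma integral_unif:
  fixes f :: "'a \<Rightarrow> real"
  assumes M: "prob_space M" and C: "C \<in> sets M" and pos: "measure M C > 0"
    and f: "f \<in> borel_measurable M"
  shows "integral\<^sup>L (uniform_measure M C) f = (\<integral>x. indicator C x * f x \<partial>M) / measure M C"
    and "integrable (uniform_measure M C) f \<longleftrightarrow> integrable M (\<lambda>x. indicator C x * f x)"
proof -
  have g: "(\<lambda>x. indicator C x / measure M C) \<in> borel_measurable M" using C by measurable
  show "integral\<^sup>L (uniform_measure M C) f = (\<integral>x. indicator C x * f x \<partial>M) / measure M C"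
    unfolding unif_density[OF M C pos]
    by (subst integral_density[OF f g]) (auto simp: pos less_imp_le)
  have "integrable (uniform_measure M C) f \<longleftrightarrow> integrable M (\<lambda>x. (indicator C x / measure M C) * f x)"
    unfolding unif_density[OF M C pos]
    by (subst integrable_density[OF f g]) (auto simp: pos less_imp_le)
  also have "\<dots> \<longleftrightarrow> integrable M (\<lambda>x. (1 / measure M C) * (indicator C x * f x))"
    by (simp add: field_simps)
  also have "\<dots> \<longleftrightarrow> integrable M (\<lambda>x. indicator C x * f x)"
    using pos by (subst integrable_mult_left_iff) auto
  finally show "integrable (uniform_measure M C) f \<longleftrightarrow> integrable M (\<lambda>x. indicator C x * f x)" .
qed

lemma indep_key:
  fixes V :: "'a \<Rightarrow> real \<times> bool" and Q :: "'a \<Rightarrow> bool" and \<phi> :: "real \<times> bool \<Rightarrow> real"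
  assumes M: "prob_space M" and C: "C \<in> sets M" and pos: "measure M C > 0"
    and ind: "prob_space.indep_set (uniform_measure M C)
          {V -` A \<inter> space M | A. A \<in> sets (borel \<Otimes>\<^sub>M count_space UNIV)}
          {Q -` B \<inter> space M | B. B \<in> sets (count_space UNIV)}"
    and V: "V \<in> M \<rightarrow>\<^sub>M borel \<Otimes>\<^sub>M count_space UNIV"
    and Q: "Q \<in> M \<rightarrow>\<^sub>M count_space UNIV"
    and \<phi>: "\<phi> \<in> borel_measurable (borel \<Otimes>\<^sub>M count_space UNIV)"
    and int: "integrable M (\<lambda>x. \<phi> (V x))"
  shows "(\<integral>x. indicator C x * ((if Q x = q then 1 else 0) * \<phi> (V x)) \<partial>M) * measure M C
       = (\<integral>x. indicator C x * \<phi> (V x) \<partial>M) * measure M {x \<in> C. Q x = q}"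
proof -
  interpret prob_space M by (rule M)
  have em: "emeasure M C = ennreal (measure M C)" by (rule emeasure_eq_measure)
  have Um: "emeasure M C \<noteq> 0" "emeasure M C \<noteq> \<infinity>"
    unfolding em using pos by auto
  interpret U: prob_space "uniform_measure M C"
    by (rule prob_space_uniform_measure[OF Um])
  define Q' where "Q' x = ((0::real), Q x)" for x
  have Vm: "V \<in> uniform_measure M C \<rightarrow>\<^sub>M borel \<Otimes>\<^sub>M count_space UNIV"
    by (subst measurable_cong_sets[OF sets_uniform_measure refl]) (rule V)
  have Qm': "Q' \<in> M \<rightarrow>\<^sub>M borel \<Otimes>\<^sub>M count_space UNIV"
    unfolding Q'_def using Q by measurable
  have Qm: "Q' \<in> uniform_measure M C \<rightarrow>\<^sub>M borel \<Otimes>\<^sub>M count_space UNIV"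
    by (subst measurable_cong_sets[OF sets_uniform_measure refl]) (rule Qm')
  have rv: "\<forall>i\<in>UNIV. case_bool V Q' i \<in> measurable (uniform_measure M C) (case_bool (borel \<Otimes>\<^sub>M count_space UNIV) (borel \<Otimes>\<^sub>M count_space UNIV) i)"
  proof (intro ballI)
    fix i :: bool
    show "case_bool V Q' i \<in> measurable (uniform_measure M C) (case_bool (borel \<Otimes>\<^sub>M count_space UNIV) (borel \<Otimes>\<^sub>M count_space UNIV) i)"
      by (cases i) (simp_all add: Vm Qm)
  qed
  have sub: "{Q' -` A \<inter> space M | A. A \<in> sets (borel \<Otimes>\<^sub>M count_space UNIV)}
      \<subseteq> {Q -` B \<inter> space M | B. B \<in> sets (count_space UNIV)}"
  proof
    fix S assume "S \<in> {Q' -` A \<inter> space M | A. A \<in> sets (borel \<Otimes>\<^sub>M count_space UNIV)}"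
    then have "\<exists>A. S = Q' -` A \<inter> space M \<and> A \<in> sets (borel \<Otimes>\<^sub>M count_space UNIV)" by simp
    then obtain A where SA: "S = Q' -` A \<inter> space M" by (elim exE conjE)
    have "Q' -` A \<inter> space M = Q -` {b. (0, b) \<in> A} \<inter> space M"
      by (rule set_eqI) (simp add: Q'_def)
    then show "S \<in> {Q -` B \<inter> space M | B. B \<in> sets (count_space UNIV)}"
      by (intro CollectI exI[of _ "{b. (0, b) \<in> A}"]) (simp add: SA)
  qed
  have ind1: "U.indep_sets (case_bool {V -` A \<inter> space M | A. A \<in> sets (borel \<Otimes>\<^sub>M count_space UNIV)}
        {Q -` B \<inter> space M | B. B \<in> sets (count_space UNIV)}) UNIV"
    using ind unfolding U.indep_set_def .
  have ind2: "U.indep_sets (case_bool {V -` A \<inter> space M | A. A \<in> sets (borel \<Otimes>\<^sub>M count_space UNIV)}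
        {Q' -` A \<inter> space M | A. A \<in> sets (borel \<Otimes>\<^sub>M count_space UNIV)}) UNIV"
  proof (rule U.indep_sets_mono_sets[OF ind1])
    fix i :: bool
    show "case_bool {V -` A \<inter> space M | A. A \<in> sets (borel \<Otimes>\<^sub>M count_space UNIV)}
        {Q' -` A \<inter> space M | A. A \<in> sets (borel \<Otimes>\<^sub>M count_space UNIV)} i
      \<subseteq> case_bool {V -` A \<inter> space M | A. A \<in> sets (borel \<Otimes>\<^sub>M count_space UNIV)}
        {Q -` B \<inter> space M | B. B \<in> sets (count_space UNIV)} i"
      using sub by (cases i) simp_all
  qed
  have feq: "(\<lambda>i. {case_bool V Q' i -` A \<inter> space (uniform_measure M C) |A.
              A \<in> sets (case_bool (borel \<Otimes>\<^sub>M count_space UNIV) (borel \<Otimes>\<^sub>M count_space UNIV) i)})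
      = case_bool {V -` A \<inter> space M | A. A \<in> sets (borel \<Otimes>\<^sub>M count_space UNIV)}
        {Q' -` A \<inter> space M | A. A \<in> sets (borel \<Otimes>\<^sub>M count_space UNIV)}"
  proof (rule ext)
    fix i :: bool
    show "{case_bool V Q' i -` A \<inter> space (uniform_measure M C) |A.
              A \<in> sets (case_bool (borel \<Otimes>\<^sub>M count_space UNIV) (borel \<Otimes>\<^sub>M count_space UNIV) i)}
      = case_bool {V -` A \<inter> space M | A. A \<in> sets (borel \<Otimes>\<^sub>M count_space UNIV)}
        {Q' -` A \<inter> space M | A. A \<in> sets (borel \<Otimes>\<^sub>M count_space UNIV)} i"
      by (cases i) simp_all
  qed
  have iv: "U.indep_var (borel \<Otimes>\<^sub>M count_space UNIV) V (borel \<Otimes>\<^sub>M count_space UNIV) Q'"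
    unfolding U.indep_var_def U.indep_vars_def2 feq using rv ind2 by blast
  define \<psi> :: "real \<times> bool \<Rightarrow> real" where "\<psi> z = (if snd z = q then 1 else 0)" for z
  have \<psi>m: "\<psi> \<in> borel_measurable (borel \<Otimes>\<^sub>M count_space UNIV)"
    unfolding \<psi>_def by measurable
  have iv2: "U.indep_var borel (\<phi> \<circ> V) borel (\<psi> \<circ> Q')"
    by (rule U.indep_var_compose[OF iv \<phi> \<psi>m])
  have fm: "(\<lambda>x. \<phi> (V x)) \<in> borel_measurable M" using measurable_compose[OF V \<phi>] .
  have gm: "(\<lambda>x. \<psi> (Q' x)) \<in> borel_measurable M" using measurable_compose[OF Qm' \<psi>m] .
  have intU1: "integrable (uniform_measure M C) (\<phi> \<circ> V)"
    unfolding comp_def integral_unif(2)[OF M C pos fm]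
    using integrable_real_mult_indicator[OF C int] by (simp add: mult.commute)
  have intg: "integrable M (\<lambda>x. \<psi> (Q' x))"
    apply (rule integrable_const_bound[where B=1])
     apply (simp add: \<psi>_def)
    apply (rule gm)
    done
  have intU2: "integrable (uniform_measure M C) (\<psi> \<circ> Q')"
    unfolding comp_def integral_unif(2)[OF M C pos gm]
    using integrable_real_mult_indicator[OF C intg] by (simp add: mult.commute)
  have eq: "(\<integral>x. (\<phi> \<circ> V) x * (\<psi> \<circ> Q') x \<partial>uniform_measure M C)
      = (\<integral>x. (\<phi> \<circ> V) x \<partial>uniform_measure M C) * (\<integral>x. (\<psi> \<circ> Q') x \<partial>uniform_measure M C)"
    by (rule U.indep_var_lebesgue_integral[OF iv2 intU1 intU2])
  have fgm: "(\<lambda>x. \<phi> (V x) * \<psi> (Q' x)) \<in> borel_measurable M" using fm gm by measurable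
  have Qset: "{x \<in> C. Q x = q} \<in> sets M"
  proof -
    have "{x \<in> C. Q x = q} = C \<inter> (Q -` {q} \<inter> space M)" using sets.sets_into_space[OF C] by auto
    then show ?thesis using C measurable_sets[OF Q, of "{q}"] by auto
  qed
  have psiint: "(\<integral>x. indicator C x * \<psi> (Q' x) \<partial>M) = measure M {x \<in> C. Q x = q}"
  proof -
    have "(\<lambda>x. indicator C x * \<psi> (Q' x)) = (indicator {x \<in> C. Q x = q} :: 'a \<Rightarrow> real)"
      by (auto simp: fun_eq_iff \<psi>_def Q'_def indicator_def)
    then show ?thesis using Qset by simp
  qed
  have lhs: "(\<lambda>x. indicator C x * (\<phi> (V x) * \<psi> (Q' x))) = (\<lambda>x. indicator C x * ((if Q x = q then 1 else 0) * \<phi> (V x)))"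
    by (auto simp: fun_eq_iff \<psi>_def Q'_def)
  from eq have "(\<integral>x. indicator C x * (\<phi> (V x) * \<psi> (Q' x)) \<partial>M) / measure M C
      = ((\<integral>x. indicator C x * \<phi> (V x) \<partial>M) / measure M C) * ((\<integral>x. indicator C x * \<psi> (Q' x) \<partial>M) / measure M C)"
    unfolding comp_def integral_unif(1)[OF M C pos fm] integral_unif(1)[OF M C pos gm] integral_unif(1)[OF M C pos fgm] .
  then have "(\<integral>x. indicator C x * ((if Q x = q then 1 else 0) * \<phi> (V x)) \<partial>M) / measure M C
      = ((\<integral>x. indicator C x * \<phi> (V x) \<partial>M) / measure M C) * (measure M {x \<in> C. Q x = q} / measure M C)"
    unfolding psiint lhs .
  then show ?thesis
    using pos by (simp add: field_simps)
qed

locale ivs =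
  fixes M :: "'a measure"
    and Q :: "'a \<Rightarrow> bool"
    and X :: "'a \<Rightarrow> 'x"
    and Tp :: "bool \<Rightarrow> 'a \<Rightarrow> bool"
    and Yp :: "bool \<Rightarrow> bool \<Rightarrow> 'a \<Rightarrow> real"
    and xs :: "'g::finite \<Rightarrow> 'x"
    and qv :: "'n::finite \<Rightarrow> bool"
    and gv :: "'n \<Rightarrow> 'g"
  assumes M: "prob_space M"
    and Q_meas: "Q \<in> M \<rightarrow>\<^sub>M count_space UNIV"
    and X_meas: "X \<in> M \<rightarrow>\<^sub>M count_space UNIV"
    and T_meas: "\<And>q. Tp q \<in> M \<rightarrow>\<^sub>M count_space UNIV"
    and Y_meas: "\<And>q t. Yp q t \<in> borel_measurable M"
    and Y_sq_int: "\<And>q t. integrable M (\<lambda>\<omega>. (Yp q t \<omega>)^2)"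
    and xs_inj: "inj xs"
    and X_range: "\<And>\<omega>. \<omega> \<in> space M \<Longrightarrow> X \<omega> \<in> range xs"
    and independence: "\<And>q t g. measure M (Xcell M X (xs g)) > 0 \<Longrightarrow>
        prob_space.indep_set (uniform_measure M (Xcell M X (xs g)))
          {(\<lambda>\<omega>. (Yp q t \<omega>, Tp q \<omega>)) -` A \<inter> space M | A. A \<in> sets (borel \<Otimes>\<^sub>M count_space UNIV)}
          {Q -` B \<inter> space M | B. B \<in> sets (count_space UNIV)}"
    and exclusion: "\<And>t g. measure M (Xcell M X (xs g)) > 0 \<Longrightarrow>
        condP M (Xcell M X (xs g)) {\<omega> \<in> space M. Yp True t \<omega> = Yp False t \<omega>} = 1"
    and relevance: "\<And>g. measure M (Xcell M X (xs g)) > 0 \<Longrightarrow> pi_x M X Tp (xs g) > 0"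
    and monotonicity:
      "(\<forall>g. measure M (Xcell M X (xs g)) > 0 \<longrightarrow>
            condP M (Xcell M X (xs g)) {\<omega> \<in> space M. Tp True \<omega> \<ge> Tp False \<omega>} = 1)
     \<or> (\<forall>g. measure M (Xcell M X (xs g)) > 0 \<longrightarrow>
            condP M (Xcell M X (xs g)) {\<omega> \<in> space M. Tp True \<omega> \<le> Tp False \<omega>} = 1)"
    and realized: "measure (SampM M) (QXevent M Q X xs qv gv) > 0"
    and group_sizes: "\<And>g. m_g qv gv g \<ge> 2 \<and> n_g gv g - m_g qv gv g \<ge> 2"

sublocale ivs \<subseteq> P: prob_space M by (rule M)

context ivs
begin

lemma Qm[measurable]: "Q \<in> M \<rightarrow>\<^sub>M count_space UNIV" by (rule Q_meas)
lemma Xm[measurable]: "X \<in> M \<rightarrow>\<^sub>M count_space UNIV" by (rule X_meas)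
lemma Tm[measurable]: "Tp q \<in> M \<rightarrow>\<^sub>M count_space UNIV" by (rule T_meas)
lemma Ym[measurable]: "Yp q t \<in> borel_measurable M" by (rule Y_meas)

lemma Yint: "integrable M (Yp q t)"
  by (rule P.square_integrable_imp_integrable[OF Ym Y_sq_int])

definition cellS :: "bool \<Rightarrow> 'g \<Rightarrow> 'a set" where
  "cellS q g = {a \<in> space M. Q a = q \<and> X a = xs g}"

abbreviation "Tf \<equiv> Tobs Q Tp"
abbreviation "Yf \<equiv> Yobs Q Tp Yp"

lemma Tf_alt: "Tf x = (if Q x then (if Tp True x then 1 else 0) else (if Tp False x then 1 else 0))"
  by (simp add: Tobs_def)

lemma Yf_alt: "Yf x = (if Q x then (if Tp True x then Yp True True x else Yp True False x)
                                  else (if Tp False x then Yp False True x else Yp False False x))"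
  by (simp add: Yobs_def)

lemma Tf_meas[measurable]: "Tf \<in> borel_measurable M"
  unfolding Tf_alt[abs_def] by measurable

lemma Yf_meas[measurable]: "Yf \<in> borel_measurable M"
  unfolding Yf_alt[abs_def] by measurable

lemma Tf_bound: "\<bar>Tf x\<bar> \<le> 1"
  by (simp add: Tobs_def)

lemma int_bmult:
  fixes f g :: "'a \<Rightarrow> real"
  assumes f: "integrable M f" and g: "g \<in> borel_measurable M" and b: "\<And>x. \<bar>g x\<bar> \<le> B"
  shows "integrable M (\<lambda>x. g x * f x)"
proof (rule Bochner_Integration.integrable_bound[where f="\<lambda>x. B * f x"])
  show "integrable M (\<lambda>x. B * f x)" using f by simp
  show "(\<lambda>x. g x * f x) \<in> borel_measurable M" using f g by (simp add: borel_measurable_integrable)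
  have B0: "0 \<le> B" using b[of undefined] by simp
  show "AE x in M. norm (g x * f x) \<le> norm (B * f x)"
    using b B0 by (auto simp: abs_mult intro!: mult_right_mono)
qed

lemma Tf_int: "integrable M Tf"
  by (rule Bochner_Integration.integrable_bound[where f="\<lambda>x. 1::real"]) (auto simp: Tobs_def)

lemma Yf_int: "integrable M Yf"
proof -
  have "integrable M (\<lambda>x. (\<Sum>q\<in>UNIV. \<Sum>t\<in>UNIV. \<bar>Yp q t x\<bar>))"
    using Yint by (intro Bochner_Integration.integrable_sum) auto
  then show ?thesis
  proof (rule Bochner_Integration.integrable_bound)
    show "AE x in M. norm (Yf x) \<le> norm (\<Sum>q\<in>UNIV. \<Sum>t\<in>UNIV. \<bar>Yp q t x\<bar>)"
    proof (rule AE_I2)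
      fix x
      have h: "0 \<le> \<bar>Yp a b x\<bar>" for a b by simp
      note hh = h[of False False] h[of False True] h[of True False] h[of True True]
      show "norm (Yf x) \<le> norm (\<Sum>q\<in>UNIV. \<Sum>t\<in>UNIV. \<bar>Yp q t x\<bar>)"
        using hh by (cases "Q x"; cases "Tp True x"; cases "Tp False x") (simp_all add: Yobs_def UNIV_bool)
    qed
  qed simp
qed

lemma TfYf_int: "integrable M (\<lambda>x. Tf x * Yf x)"
  by (rule int_bmult[OF Yf_int Tf_meas Tf_bound])

lemma TfTf_int: "integrable M (\<lambda>x. Tf x * Tf x)"
  by (rule int_bmult[OF Tf_int Tf_meas Tf_bound])

lemma cellS_sets: "cellS q g \<in> sets M"
proof -
  have "cellS q g = Q -` {q} \<inter> space M \<inter> (X -` {xs g} \<inter> space M)" unfolding cellS_def by auto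
  then show ?thesis using measurable_sets[OF Qm, of "{q}"] measurable_sets[OF Xm, of "{xs g}"] by auto
qed

lemma Xcell_sets: "Xcell M X x \<in> sets M"
proof -
  have "Xcell M X x = X -` {x} \<inter> space M" unfolding Xcell_def by auto
  then show ?thesis using measurable_sets[OF Xm, of "{x}"] by auto
qed

lemma QX_box: "QXevent M Q X xs qv gv = boxev M (\<lambda>k. cellS (qv k) (gv k))"
  unfolding QXevent_def boxev_def cellS_def SampM_def by (auto simp: space_PiM)

lemma QXi_box: "QXevent_i M Q X xs qv gv i = boxev M (\<lambda>k. if k = i then cellS (qv i) (gv i) else space M)"
  unfolding QXevent_i_def boxev_def cellS_def SampM_def by (auto simp: space_PiM)

lemma cells_pos_units: "measure M (cellS (qv k) (gv k)) > 0"
proof -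
  have "measure (SampM M) (QXevent M Q X xs qv gv) = (\<Prod>k\<in>UNIV. measure M (cellS (qv k) (gv k)))"
    unfolding QX_box by (rule box_measure[OF M cellS_sets])
  note eq = this
  have "0 < (\<Prod>k\<in>UNIV. measure M (cellS (qv k) (gv k)))" using realized by (simp only: eq)
  then have "(\<Prod>k\<in>UNIV. measure M (cellS (qv k) (gv k))) \<noteq> 0" by linarith
  then have "measure M (cellS (qv k) (gv k)) \<noteq> 0" by (simp add: prod_zero_iff)
  then show ?thesis by (simp add: zero_less_measure_iff)
qed

lemma cells_pos: "measure M (cellS q g) > 0"
proof -
  have "\<exists>k. qv k = q \<and> gv k = g"
  proof (cases q)
    case True
    have "m_g qv gv g \<ge> 2" using group_sizes by blast
    then have "card {i. qv i \<and> gv i = g} \<noteq> 0" unfolding m_g_def by linarith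
    then have "{i. qv i \<and> gv i = g} \<noteq> {}" by (metis card.empty)
    then show ?thesis using True by auto
  next
    case False
    have "n_g gv g - m_g qv gv g \<ge> 2" using group_sizes by blast
    then have "n_g gv g \<noteq> m_g qv gv g" by auto
    then have "{i. gv i = g} \<noteq> {i. qv i \<and> gv i = g}" unfolding n_g_def m_g_def by auto
    then show ?thesis using False by auto
  qed
  then obtain k where "qv k = q" "gv k = g" by blast
  then show ?thesis using cells_pos_units[of k] by simp
qed

lemma cellS_sub: "cellS q g \<subseteq> Xcell M X (xs g)"
  unfolding cellS_def Xcell_def by auto

lemma Xcell_pos: "measure M (Xcell M X (xs g)) > 0"
  using cells_pos[of True g] P.finite_measure_mono[OF cellS_sub[of True g] Xcell_sets] by linarith

lemma cellS_eq: "cellS q g = {x \<in> Xcell M X (xs g). Q x = q}"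
  unfolding cellS_def Xcell_def by auto

end

lemma sum_pairs:
  fixes f :: "'i::finite \<Rightarrow> 'j::finite \<Rightarrow> real"
  shows "(\<Sum>p\<in>UNIV. f (fst p) (snd p)) = (\<Sum>i\<in>UNIV. \<Sum>j\<in>UNIV. f i j)"
proof -
  have "(\<Sum>i\<in>UNIV. \<Sum>j\<in>UNIV. f i j) = (\<Sum>p\<in>UNIV \<times> UNIV. f (fst p) (snd p))"
    by (subst sum.cartesian_product) (simp add: case_prod_unfold)
  then show ?thesis by (simp add: UNIV_Times_UNIV)
qed

context ivs begin

lemma qf:
  fixes F :: "'a \<Rightarrow> real" and P :: "real^'n^'n"
  assumes F: "integrable M F"
  shows "condE (SampM M) (QXevent M Q X xs qv gv) (\<lambda>\<omega>. (\<chi> i. Tf (\<omega> i)) \<bullet> (P *v (\<chi> i. F (\<omega> i)))) =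
    (\<Sum>i\<in>UNIV. \<Sum>j\<in>UNIV. P$i$j * condE M (cellS (qv i) (gv i)) Tf * condE M (cellS (qv j) (gv j)) F)
    + (\<Sum>i\<in>UNIV. P$i$i * (condE M (cellS (qv i) (gv i)) (\<lambda>x. Tf x * F x)
          - condE M (cellS (qv i) (gv i)) Tf * condE M (cellS (qv i) (gv i)) F))"
proof -
  define A where "A = (\<lambda>k. cellS (qv k) (gv k))"
  have As: "\<And>k. A k \<in> sets M" unfolding A_def by (rule cellS_sets)
  have Ap: "\<And>k. measure M (A k) > 0" unfolding A_def by (rule cells_pos)
  define E where "E = boxev M A"
  define G where "G = (\<lambda>p (\<omega>::'n \<Rightarrow> 'a). Tf (\<omega> (fst p)) * F (\<omega> (snd p)))"
  define c where "c = (\<lambda>p. P $ fst p $ snd p)"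
  define mT where "mT = (\<lambda>i. condE M (A i) Tf)"
  define mF where "mF = (\<lambda>i. condE M (A i) F)"
  define cTF where "cTF = (\<lambda>i. condE M (A i) (\<lambda>x. Tf x * F x))"
  have TFint: "integrable M (\<lambda>x. Tf x * F x)" by (rule int_bmult[OF F Tf_meas Tf_bound])
  have expand: "(\<chi> i. Tf (\<omega> i)) \<bullet> (P *v (\<chi> i. F (\<omega> i))) = (\<Sum>p\<in>UNIV. c p * G p \<omega>)" for \<omega>
  proof -
    have "(\<chi> i. Tf (\<omega> i)) \<bullet> (P *v (\<chi> i. F (\<omega> i))) = (\<Sum>i\<in>UNIV. \<Sum>j\<in>UNIV. c (i, j) * G (i, j) \<omega>)"
      by (simp add: inner_vec_def matrix_vector_mult_def sum_distrib_left c_def G_def mult_ac)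
    also have "\<dots> = (\<Sum>p\<in>UNIV \<times> UNIV. c p * G p \<omega>)"
      by (subst sum.cartesian_product) (simp add: case_prod_unfold)
    finally show ?thesis by (simp add: UNIV_Times_UNIV)
  qed
  have Gint: "integrable (SampM M) (\<lambda>\<omega>. indicator E \<omega> * G p \<omega>)" for p
  proof (cases "fst p = snd p")
    case True
    then show ?thesis unfolding E_def G_def using box_single(2)[where A=A and f="\<lambda>x. Tf x * F x", OF M As Ap TFint, of "fst p"]
      by (simp add: mult_ac)
  next
    case False
    then show ?thesis unfolding E_def G_def using box_pair(2)[where A=A, OF M As Ap Tf_int F False] by simp
  qed
  have Gc: "condE (SampM M) E (G p) = mT (fst p) * mF (snd p) + (if fst p = snd p then cTF (fst p) - mT (fst p) * mF (fst p) else 0)" for p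
  proof (cases "fst p = snd p")
    case True
    have "condE (SampM M) E (G p) = condE (SampM M) E (\<lambda>\<omega>. (\<lambda>x. Tf x * F x) (\<omega> (fst p)))"
      unfolding G_def using True by simp
    also have "\<dots> = cTF (fst p)"
      unfolding E_def cTF_def by (rule box_single(1)[where A=A, OF M As Ap TFint])
    finally show ?thesis using True by simp
  next
    case False
    then show ?thesis unfolding E_def G_def mT_def mF_def using box_pair(1)[where A=A, OF M As Ap Tf_int F False] by simp
  qed
  have "condE (SampM M) E (\<lambda>\<omega>. (\<chi> i. Tf (\<omega> i)) \<bullet> (P *v (\<chi> i. F (\<omega> i))))
      = condE (SampM M) E (\<lambda>\<omega>. \<Sum>p\<in>UNIV. c p * G p \<omega>)"
    unfolding expand ..
  also have "\<dots> = (\<Sum>p\<in>UNIV. c p * condE (SampM M) E (G p))"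
    by (rule condE_sum) (auto intro: Gint)
  also have "\<dots> = (\<Sum>p\<in>UNIV. c p * (mT (fst p) * mF (snd p)))
       + (\<Sum>p\<in>UNIV. c p * (if fst p = snd p then cTF (fst p) - mT (fst p) * mF (fst p) else 0))"
    unfolding Gc by (simp add: distrib_left sum.distrib)
  also have "(\<Sum>p\<in>UNIV. c p * (mT (fst p) * mF (snd p))) = (\<Sum>i\<in>UNIV. \<Sum>j\<in>UNIV. P$i$j * mT i * mF j)"
    using sum_pairs[of "\<lambda>i j. P$i$j * mT i * mF j"] by (simp add: c_def mult_ac)
  also have "(\<Sum>p\<in>UNIV. c p * (if fst p = snd p then cTF (fst p) - mT (fst p) * mF (fst p) else 0))
      = (\<Sum>i\<in>UNIV. P$i$i * (cTF i - mT i * mF i))"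
    using sum_pairs[of "\<lambda>i j. P$i$j * (if i = j then cTF i - mT i * mF i else 0)"]
    by (simp add: c_def if_distrib[of "\<lambda>x. _ * x"] sum.delta cong: if_cong)
  finally show ?thesis
    unfolding E_def A_def QX_box mT_def mF_def cTF_def .
qed

end

lemma cov_lemma:
  fixes f g :: "'a \<Rightarrow> real"
  assumes M: "prob_space M" and S: "S \<in> sets M" and pos: "measure M S > 0"
    and f: "integrable M f" and g: "integrable M g" and fg: "integrable M (\<lambda>x. f x * g x)"
  shows "condE M S (\<lambda>x. (f x - condE M S f) * (g x - condE M S g)) = condE M S (\<lambda>x. f x * g x) - condE M S f * condE M S g"
proof -
  interpret prob_space M by (rule M)
  define a where "a = condE M S f"
  define b where "b = condE M S g"
  have i1: "integrable M (\<lambda>x. indicator S x * f x)" using integrable_real_mult_indicator[OF S f] by (simp add: mult.commute)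
  have i2: "integrable M (\<lambda>x. indicator S x * g x)" using integrable_real_mult_indicator[OF S g] by (simp add: mult.commute)
  have i3: "integrable M (\<lambda>x. indicator S x * (f x * g x))" using integrable_real_mult_indicator[OF S fg] by (simp add: mult.commute)
  have i4: "integrable M (\<lambda>x. indicator S x :: real)" by (rule integrable_real_indicator[OF S]) (simp add: emeasure_eq_measure)
  have eq: "indicator S x * ((f x - a) * (g x - b)) = indicator S x * (f x * g x) - b * (indicator S x * f x) - a * (indicator S x * g x) + a * b * indicator S x" for x
    by (simp add: algebra_simps)
  have "(\<integral>x. indicator S x * ((f x - a) * (g x - b)) \<partial>M) =
      (\<integral>x. indicator S x * (f x * g x) \<partial>M) - b * (\<integral>x. indicator S x * f x \<partial>M) - a * (\<integral>x. indicator S x * g x \<partial>M) + a * b * measure M S"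
    unfolding eq using i1 i2 i3 i4 S by simp
  then show ?thesis
    using pos unfolding condE_def a_def[symmetric] b_def[symmetric] unfolding a_def b_def condE_def
    by (simp add: field_simps)
qed

context ivs begin

lemma Eui_setup:
  fixes i :: 'n
  defines "A' \<equiv> (\<lambda>k. if k = i then cellS (qv i) (gv i) else space M)"
  shows "QXevent_i M Q X xs qv gv i = boxev M A'" "\<And>k. A' k \<in> sets M" "\<And>k. measure M (A' k) > 0"
    "A' i = cellS (qv i) (gv i)"
  unfolding A'_def using QXi_box cellS_sets cells_pos prob_space.prob_space[OF M] by auto

lemma Eueps:
  "E_u_eps M Q X Tp Yp xs qv gv i = condE M (cellS (qv i) (gv i)) (\<lambda>x. Tf x * Yf x)
      - condE M (cellS (qv i) (gv i)) Tf * condE M (cellS (qv i) (gv i)) Yf"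
proof -
  obtain A' where A': "QXevent_i M Q X xs qv gv i = boxev M A'" "\<And>k. A' k \<in> sets M" "\<And>k. measure M (A' k) > 0"
    "A' i = cellS (qv i) (gv i)" using Eui_setup by blast
  define S where "S = cellS (qv i) (gv i)"
  have c1: "condE (SampM M) (boxev M A') (\<lambda>\<omega>. Tf (\<omega> i)) = condE M S Tf"
    using box_single(1)[where A=A', OF M A'(2,3) Tf_int] A'(4) unfolding S_def by simp
  have c2: "condE (SampM M) (boxev M A') (\<lambda>\<omega>. Yf (\<omega> i)) = condE M S Yf"
    using box_single(1)[where A=A', OF M A'(2,3) Yf_int] A'(4) unfolding S_def by simp
  define a where "a = condE M S Tf"
  define b where "b = condE M S Yf"
  have eqf: "(\<lambda>x. (Tf x - a) * (Yf x - b)) = (\<lambda>x. Tf x * Yf x - b * Tf x - a * Yf x + a * b)"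
    by (simp add: fun_eq_iff algebra_simps)
  have fint: "integrable M (\<lambda>x. (Tf x - a) * (Yf x - b))"
    unfolding eqf by (intro Bochner_Integration.integrable_add Bochner_Integration.integrable_diff integrable_mult_right TfYf_int Tf_int Yf_int P.integrable_const)
  have "E_u_eps M Q X Tp Yp xs qv gv i = condE (SampM M) (boxev M A') (\<lambda>\<omega>. (\<lambda>x. (Tf x - a) * (Yf x - b)) (\<omega> i))"
    unfolding E_u_eps_def Let_def A'(1) c1 c2 a_def b_def ..
  also have "\<dots> = condE M S (\<lambda>x. (Tf x - a) * (Yf x - b))"
    using box_single(1)[where A=A', OF M A'(2,3) fint] A'(4) unfolding S_def by simp
  also have "\<dots> = condE M S (\<lambda>x. Tf x * Yf x) - a * b"
    unfolding a_def b_def by (rule cov_lemma[OF M _ _ Tf_int Yf_int TfYf_int]) (simp_all add: S_def cellS_sets cells_pos)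
  finally show ?thesis unfolding S_def a_def b_def .
qed

lemma Eusq:
  "E_u_sq M Q X Tp xs qv gv i = condE M (cellS (qv i) (gv i)) (\<lambda>x. Tf x * Tf x)
      - condE M (cellS (qv i) (gv i)) Tf * condE M (cellS (qv i) (gv i)) Tf"
proof -
  obtain A' where A': "QXevent_i M Q X xs qv gv i = boxev M A'" "\<And>k. A' k \<in> sets M" "\<And>k. measure M (A' k) > 0"
    "A' i = cellS (qv i) (gv i)" using Eui_setup by blast
  define S where "S = cellS (qv i) (gv i)"
  have c1: "condE (SampM M) (boxev M A') (\<lambda>\<omega>. Tf (\<omega> i)) = condE M S Tf"
    using box_single(1)[where A=A', OF M A'(2,3) Tf_int] A'(4) unfolding S_def by simp
  define a where "a = condE M S Tf"
  have eqf: "(\<lambda>x. (Tf x - a) * (Tf x - a)) = (\<lambda>x. Tf x * Tf x - a * Tf x - a * Tf x + a * a)"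
    by (simp add: fun_eq_iff algebra_simps)
  have fint: "integrable M (\<lambda>x. (Tf x - a) * (Tf x - a))"
    unfolding eqf by (intro Bochner_Integration.integrable_add Bochner_Integration.integrable_diff integrable_mult_right TfTf_int Tf_int P.integrable_const)
  have "E_u_sq M Q X Tp xs qv gv i = condE (SampM M) (boxev M A') (\<lambda>\<omega>. (\<lambda>x. (Tf x - a) * (Tf x - a)) (\<omega> i))"
    unfolding E_u_sq_def Let_def A'(1) c1 a_def power2_eq_square ..
  also have "\<dots> = condE M S (\<lambda>x. (Tf x - a) * (Tf x - a))"
    using box_single(1)[where A=A', OF M A'(2,3) fint] A'(4) unfolding S_def by simp
  also have "\<dots> = condE M S (\<lambda>x. Tf x * Tf x) - a * a"
    unfolding a_def by (rule cov_lemma[OF M _ _ Tf_int Tf_int TfTf_int]) (simp_all add: S_def cellS_sets cells_pos)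
  finally show ?thesis unfolding S_def a_def .
qed

end

context ivs begin

abbreviation "CX g \<equiv> Xcell M X (xs g)"

lemma ind_real_meas[measurable]: "(\<lambda>x. if Tp q x then (1::real) else 0) \<in> borel_measurable M"
  by measurable

lemma V_meas: "(\<lambda>\<omega>. (Yp q t \<omega>, Tp q \<omega>)) \<in> M \<rightarrow>\<^sub>M borel \<Otimes>\<^sub>M count_space UNIV"
  by measurable

lemma phi_meas: "(\<lambda>z::real \<times> bool. (if snd z = b then 1 else 0) * fst z) \<in> borel_measurable (borel \<Otimes>\<^sub>M count_space UNIV)"
  by measurable

lemma phi1_meas: "(\<lambda>z::real \<times> bool. (if snd z = b then 1 else 0)) \<in> borel_measurable (borel \<Otimes>\<^sub>M count_space UNIV)"
  by measurable

lemma key_app: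
  assumes "\<phi> \<in> borel_measurable (borel \<Otimes>\<^sub>M count_space UNIV)"
    and "integrable M (\<lambda>x. \<phi> (Yp q t x, Tp q x))"
  shows "(\<integral>x. indicator (CX g) x * ((if Q x = q' then 1 else 0) * \<phi> (Yp q t x, Tp q x)) \<partial>M)
       = (\<integral>x. indicator (CX g) x * \<phi> (Yp q t x, Tp q x) \<partial>M) * measure M (cellS q' g) / measure M (CX g)"
proof -
  have "(\<integral>x. indicator (CX g) x * ((if Q x = q' then 1 else 0) * \<phi> (Yp q t x, Tp q x)) \<partial>M) * measure M (CX g)
       = (\<integral>x. indicator (CX g) x * \<phi> (Yp q t x, Tp q x) \<partial>M) * measure M {x \<in> CX g. Q x = q'}"
    by (rule indep_key[OF M Xcell_sets Xcell_pos independence[OF Xcell_pos] V_meas Qm assms(1)])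
       (use assms(2) in simp)
  then show ?thesis using Xcell_pos[of g] unfolding cellS_eq[symmetric] by (simp add: field_simps)
qed

lemma int_ind: "integrable M (f::'a \<Rightarrow> real) \<Longrightarrow> A \<in> sets M \<Longrightarrow> integrable M (\<lambda>x. indicator A x * f x)"
  using integrable_real_mult_indicator[of A M f] by (simp add: mult.commute)

lemma ind_cellS: "indicator (cellS q g) x = indicator (CX g) x * (if Q x = q then 1 else (0::real))"
  unfolding cellS_eq by (auto simp: indicator_def)

lemma mT_cell: "condE M (cellS q g) Tf = (\<integral>x. indicator (CX g) x * (if Tp q x then 1 else 0) \<partial>M) / measure M (CX g)"
proof -
  define \<phi> where "\<phi> = (\<lambda>z::real \<times> bool. (if snd z = True then 1 else 0) * (1::real))"
  have \<phi>m: "\<phi> \<in> borel_measurable (borel \<Otimes>\<^sub>M count_space UNIV)" unfolding \<phi>_def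
    by measurable
  have \<phi>i: "integrable M (\<lambda>x. \<phi> (Yp q True x, Tp q x))"
    unfolding \<phi>_def by (rule int_bmult[where B=1]) auto
  have "(\<integral>x. indicator (cellS q g) x * Tf x \<partial>M)
      = (\<integral>x. indicator (CX g) x * ((if Q x = q then 1 else 0) * \<phi> (Yp q True x, Tp q x)) \<partial>M)"
    unfolding ind_cellS by (intro Bochner_Integration.integral_cong refl) (auto simp: \<phi>_def Tobs_def)
  also have "\<dots> = (\<integral>x. indicator (CX g) x * \<phi> (Yp q True x, Tp q x) \<partial>M) * measure M (cellS q g) / measure M (CX g)"
    by (rule key_app[OF \<phi>m \<phi>i])
  finally show ?thesis
    using cells_pos[of q g] unfolding condE_def by (simp add: \<phi>_def)
qed

lemma mY_cell: "condE M (cellS q g) Yf =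
   ((\<integral>x. indicator (CX g) x * ((if Tp q x then 1 else 0) * Yp q True x) \<partial>M)
   + (\<integral>x. indicator (CX g) x * ((if \<not> Tp q x then 1 else 0) * Yp q False x) \<partial>M)) / measure M (CX g)"
proof -
  define \<phi>1 where "\<phi>1 = (\<lambda>z::real \<times> bool. (if snd z = True then 1 else 0) * fst z :: real)"
  define \<phi>0 where "\<phi>0 = (\<lambda>z::real \<times> bool. (if snd z = False then 1 else 0) * fst z :: real)"
  have \<phi>1m: "\<phi>1 \<in> borel_measurable (borel \<Otimes>\<^sub>M count_space UNIV)" unfolding \<phi>1_def by (rule phi_meas)
  have \<phi>0m: "\<phi>0 \<in> borel_measurable (borel \<Otimes>\<^sub>M count_space UNIV)" unfolding \<phi>0_def by (rule phi_meas)
  have \<phi>1i: "integrable M (\<lambda>x. \<phi>1 (Yp q True x, Tp q x))"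
    unfolding \<phi>1_def by (simp, rule int_bmult[OF Yint, where B=1]) auto
  have \<phi>0i: "integrable M (\<lambda>x. \<phi>0 (Yp q False x, Tp q x))"
    unfolding \<phi>0_def by (simp, rule int_bmult[OF Yint, where B=1]) auto
  have i1: "integrable M (\<lambda>x. indicator (CX g) x * ((if Q x = q then 1 else 0) * \<phi>1 (Yp q True x, Tp q x)))"
    by (intro int_ind int_bmult[OF \<phi>1i, where B=1] Xcell_sets) auto
  have i0: "integrable M (\<lambda>x. indicator (CX g) x * ((if Q x = q then 1 else 0) * \<phi>0 (Yp q False x, Tp q x)))"
    by (intro int_ind int_bmult[OF \<phi>0i, where B=1] Xcell_sets) auto
  have "(\<integral>x. indicator (cellS q g) x * Yf x \<partial>M)
      = (\<integral>x. indicator (CX g) x * ((if Q x = q then 1 else 0) * \<phi>1 (Yp q True x, Tp q x))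
           + indicator (CX g) x * ((if Q x = q then 1 else 0) * \<phi>0 (Yp q False x, Tp q x)) \<partial>M)"
    unfolding ind_cellS by (intro Bochner_Integration.integral_cong refl) (auto simp: \<phi>1_def \<phi>0_def Yobs_def)
  also have "\<dots> = (\<integral>x. indicator (CX g) x * ((if Q x = q then 1 else 0) * \<phi>1 (Yp q True x, Tp q x)) \<partial>M)
      + (\<integral>x. indicator (CX g) x * ((if Q x = q then 1 else 0) * \<phi>0 (Yp q False x, Tp q x)) \<partial>M)"
    by (rule Bochner_Integration.integral_add[OF i1 i0])
  also have "\<dots> = (\<integral>x. indicator (CX g) x * \<phi>1 (Yp q True x, Tp q x) \<partial>M) * measure M (cellS q g) / measure M (CX g)
      + (\<integral>x. indicator (CX g) x * \<phi>0 (Yp q False x, Tp q x) \<partial>M) * measure M (cellS q g) / measure M (CX g)"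
    by (simp only: key_app[OF \<phi>1m \<phi>1i] key_app[OF \<phi>0m \<phi>0i])
  finally show ?thesis
    using cells_pos[of q g] Xcell_pos[of g] unfolding condE_def by (simp add: \<phi>1_def \<phi>0_def field_simps)
qed

end

context ivs begin

lemma condP_AE:
  assumes E: "E \<in> sets M" and C: "C \<in> sets M" and pos: "measure M C > 0" and cp: "condP M C E = 1"
  shows "AE x in M. x \<in> C \<longrightarrow> x \<in> E"
proof (rule AE_I[where N="C - E"])
  show "{x \<in> space M. \<not> (x \<in> C \<longrightarrow> x \<in> E)} \<subseteq> C - E" by auto
  show "C - E \<in> sets M" using C E by auto
  have "measure M (C \<inter> E) = measure M C" using cp pos unfolding condP_def by (simp add: field_simps)
  then have "measure M (C - E) = 0" using P.finite_measure_Diff'[OF C E] by simp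
  then show "emeasure M (C - E) = 0" using C E by (simp add: P.emeasure_eq_measure)
qed

lemma excl_AE: "AE x in M. x \<in> CX g \<longrightarrow> Yp True t x = Yp False t x"
proof -
  have s: "{\<omega> \<in> space M. Yp True t \<omega> = Yp False t \<omega>} \<in> sets M" by measurable
  show ?thesis using condP_AE[OF s Xcell_sets Xcell_pos exclusion[OF Xcell_pos]] by auto
qed

lemma mono_sets1: "{\<omega> \<in> space M. Tp True \<omega> \<ge> Tp False \<omega>} \<in> sets M"
proof -
  have "{\<omega> \<in> space M. Tp True \<omega> \<ge> Tp False \<omega>} = {\<omega> \<in> space M. Tp False \<omega> \<longrightarrow> Tp True \<omega>}" by auto
  also have "\<dots> \<in> sets M" by measurable
  finally show ?thesis .
qed

lemma mono_sets2: "{\<omega> \<in> space M. Tp True \<omega> \<le> Tp False \<omega>} \<in> sets M"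
proof -
  have "{\<omega> \<in> space M. Tp True \<omega> \<le> Tp False \<omega>} = {\<omega> \<in> space M. Tp True \<omega> \<longrightarrow> Tp False \<omega>}" by auto
  also have "\<dots> \<in> sets M" by measurable
  finally show ?thesis .
qed

lemma comp_sets: "CX g \<inter> compliers M Tp \<in> sets M"
proof -
  have "compliers M Tp \<in> sets M" unfolding compliers_def by measurable
  then show ?thesis using Xcell_sets by auto
qed

definition tr :: "bool \<Rightarrow> 'a \<Rightarrow> real" where "tr q x = (if Tp q x then 1 else 0)"

lemma tr_meas[measurable]: "tr q \<in> borel_measurable M" unfolding tr_def by measurable

lemma iYb: "integrable M (\<lambda>x. indicator (CX g) x * (b x * Yp q t x))" if "b \<in> borel_measurable M" "\<And>x. \<bar>b x\<bar> \<le> B" for b B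
  by (intro int_ind Xcell_sets) (rule int_bmult[OF Yint that(1) that(2)])

definition Delta :: "'a \<Rightarrow> real" where "Delta x = Yp False True x - Yp False False x"

lemma dT_int: "condE M (cellS True g) Tf - condE M (cellS False g) Tf
   = (\<integral>x. indicator (CX g) x * (tr True x - tr False x) \<partial>M) / measure M (CX g)"
proof -
  have i: "integrable M (\<lambda>x. indicator (CX g) x * tr q x)" for q
  proof -
    have "integrable M (tr q)" by (rule Bochner_Integration.integrable_bound[where f="\<lambda>x. 1::real"]) (auto simp: tr_def)
    then show ?thesis by (rule int_ind) (rule Xcell_sets)
  qed
  have "(\<integral>x. indicator (CX g) x * (tr True x - tr False x) \<partial>M)
      = (\<integral>x. indicator (CX g) x * tr True x - indicator (CX g) x * tr False x \<partial>M)"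
    by (simp add: algebra_simps)
  also have "\<dots> = (\<integral>x. indicator (CX g) x * tr True x \<partial>M) - (\<integral>x. indicator (CX g) x * tr False x \<partial>M)"
    by (rule Bochner_Integration.integral_diff[OF i i])
  finally show ?thesis unfolding mT_cell by (simp add: tr_def diff_divide_distrib)
qed

end

context ivs begin

lemma dY_int: "condE M (cellS True g) Yf - condE M (cellS False g) Yf
   = (\<integral>x. indicator (CX g) x * ((tr True x - tr False x) * Delta x) \<partial>M) / measure M (CX g)"
proof -
  note Xcell_sets[measurable]
  have b1: "\<bar>tr q x\<bar> \<le> 1" for q x by (simp add: tr_def)
  have b0: "\<bar>1 - tr q x\<bar> \<le> 1" for q x by (simp add: tr_def)
  have m0: "(\<lambda>x. 1 - tr q x) \<in> borel_measurable M" for q by measurable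
  have i1: "integrable M (\<lambda>x. indicator (CX g) x * (tr q x * Yp q' t x))" for q q' t
    by (rule iYb[OF tr_meas b1])
  have i0: "integrable M (\<lambda>x. indicator (CX g) x * ((1 - tr q x) * Yp q' t x))" for q q' t
    by (rule iYb[OF m0 b0])
  have conv: "(\<integral>x. indicator (CX g) x * ((if \<not> Tp q x then 1 else 0) * Yp q False x) \<partial>M)
      = (\<integral>x. indicator (CX g) x * ((1 - tr q x) * Yp q False x) \<partial>M)" for q
    by (intro Bochner_Integration.integral_cong refl) (simp add: tr_def)
  have conv1: "(\<integral>x. indicator (CX g) x * ((if Tp q x then 1 else 0) * Yp q True x) \<partial>M)
      = (\<integral>x. indicator (CX g) x * (tr q x * Yp q True x) \<partial>M)" for q
    by (intro Bochner_Integration.integral_cong refl) (simp add: tr_def)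
  define F where "F = (\<lambda>x. indicator (CX g) x * (tr True x * Yp True True x) + indicator (CX g) x * ((1 - tr True x) * Yp True False x)
      - (indicator (CX g) x * (tr False x * Yp False True x) + indicator (CX g) x * ((1 - tr False x) * Yp False False x)))"
  have "condE M (cellS True g) Yf - condE M (cellS False g) Yf = (\<integral>x. F x \<partial>M) / measure M (CX g)"
    unfolding mY_cell conv conv1 F_def
    by (simp add: i1 i0 Bochner_Integration.integral_add Bochner_Integration.integral_diff diff_divide_distrib)
  also have "(\<integral>x. F x \<partial>M) = (\<integral>x. indicator (CX g) x * ((tr True x - tr False x) * Delta x) \<partial>M)"
  proof (rule integral_cong_AE)
    show "F \<in> borel_measurable M" unfolding F_def by measurable
    show "(\<lambda>x. indicator (CX g) x * ((tr True x - tr False x) * Delta x)) \<in> borel_measurable M"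
      unfolding Delta_def by measurable
    show "AE x in M. F x = indicator (CX g) x * ((tr True x - tr False x) * Delta x)"
      using excl_AE[of g True] excl_AE[of g False]
    proof eventually_elim
      case (elim x)
      then show ?case
        by (cases "x \<in> CX g") (simp_all add: F_def tr_def Delta_def algebra_simps)
    qed
  qed
  finally show ?thesis .
qed

lemma cell_main:
  "(condE M (cellS True g) Tf - condE M (cellS False g) Tf)^2 = (pi_x M X Tp (xs g))^2 \<and>
   (condE M (cellS True g) Tf - condE M (cellS False g) Tf) * (condE M (cellS True g) Yf - condE M (cellS False g) Yf)
     = (pi_x M X Tp (xs g))^2 * tau_x M X Tp Yp (xs g)"
proof -
  note Xcell_sets[measurable] comp_sets[measurable]
  define K where "K = CX g \<inter> compliers M Tp"
  have K[measurable]: "K \<in> sets M" unfolding K_def by (rule comp_sets)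
  define IT where "IT = (\<integral>x. indicator (CX g) x * (tr True x - tr False x) \<partial>M)"
  define ID where "ID = (\<integral>x. indicator (CX g) x * ((tr True x - tr False x) * Delta x) \<partial>M)"
  define J where "J = (\<integral>x. indicator K x * Delta x \<partial>M)"
  have mIT: "(\<lambda>x. indicator (CX g) x * (tr True x - tr False x)) \<in> borel_measurable M" by measurable
  have mID: "(\<lambda>x. indicator (CX g) x * ((tr True x - tr False x) * Delta x)) \<in> borel_measurable M"
    unfolding Delta_def by measurable
  have mK: "(\<lambda>x. indicator K x :: real) \<in> borel_measurable M" by measurable
  have mKs: "(\<lambda>x. - indicator K x :: real) \<in> borel_measurable M" by measurable
  have mJ: "(\<lambda>x. indicator K x * Delta x) \<in> borel_measurable M" unfolding Delta_def by measurable
  have mJs: "(\<lambda>x. - (indicator K x * Delta x)) \<in> borel_measurable M" unfolding Delta_def by measurable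
  have "\<exists>s::real. s * s = 1 \<and> IT = s * measure M K \<and> ID = s * J"
  proof (cases "\<forall>g. measure M (Xcell M X (xs g)) > 0 \<longrightarrow>
            condP M (Xcell M X (xs g)) {\<omega> \<in> space M. Tp True \<omega> \<ge> Tp False \<omega>} = 1")
    case True
    then have cp: "condP M (CX g) {\<omega> \<in> space M. Tp True \<omega> \<ge> Tp False \<omega>} = 1" using Xcell_pos by blast
    have ae: "AE x in M. x \<in> CX g \<longrightarrow> Tp False x \<le> Tp True x"
      using condP_AE[OF mono_sets1 Xcell_sets Xcell_pos cp] by auto
    have "IT = (\<integral>x. indicator K x \<partial>M)"
      unfolding IT_def
    proof (rule integral_cong_AE[OF mIT mK])
      show "AE x in M. indicator (CX g) x * (tr True x - tr False x) = indicator K x"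
        using ae by eventually_elim (auto simp: K_def compliers_def tr_def indicator_def Xcell_def)
    qed
    also have "\<dots> = measure M K" using K by simp
    finally have 1: "IT = 1 * measure M K" by simp
    have "ID = J"
      unfolding ID_def J_def
    proof (rule integral_cong_AE[OF mID mJ])
      show "AE x in M. indicator (CX g) x * ((tr True x - tr False x) * Delta x) = indicator K x * Delta x"
        using ae by eventually_elim (auto simp: K_def compliers_def tr_def indicator_def Xcell_def)
    qed
    then show ?thesis using 1 by (intro exI[of _ 1]) simp
  next
    case False
    then have "\<forall>g. measure M (Xcell M X (xs g)) > 0 \<longrightarrow>
            condP M (Xcell M X (xs g)) {\<omega> \<in> space M. Tp True \<omega> \<le> Tp False \<omega>} = 1"
      using monotonicity by blast
    then have cp: "condP M (CX g) {\<omega> \<in> space M. Tp True \<omega> \<le> Tp False \<omega>} = 1" using Xcell_pos by blast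
    have ae: "AE x in M. x \<in> CX g \<longrightarrow> Tp True x \<le> Tp False x"
      using condP_AE[OF mono_sets2 Xcell_sets Xcell_pos cp] by auto
    have "IT = (\<integral>x. - indicator K x \<partial>M)"
      unfolding IT_def
    proof (rule integral_cong_AE[OF mIT mKs])
      show "AE x in M. indicator (CX g) x * (tr True x - tr False x) = - indicator K x"
        using ae by eventually_elim (auto simp: K_def compliers_def tr_def indicator_def Xcell_def)
    qed
    also have "\<dots> = - measure M K" using K by simp
    finally have 1: "IT = (-1) * measure M K" by simp
    have "ID = (\<integral>x. - (indicator K x * Delta x) \<partial>M)"
      unfolding ID_def
    proof (rule integral_cong_AE[OF mID mJs])
      show "AE x in M. indicator (CX g) x * ((tr True x - tr False x) * Delta x) = - (indicator K x * Delta x)"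
        using ae by eventually_elim (auto simp: K_def compliers_def tr_def indicator_def Xcell_def)
    qed
    then have "ID = (-1) * J" unfolding J_def by simp
    then show ?thesis using 1 by (intro exI[of _ "-1"]) simp
  qed
  then obtain s :: real where s: "s * s = 1" "IT = s * measure M K" "ID = s * J" by blast
  have pi: "pi_x M X Tp (xs g) = measure M K / measure M (CX g)"
    unfolding pi_x_def condP_def K_def ..
  have Kpos: "measure M K > 0"
    using relevance[OF Xcell_pos[of g]] Xcell_pos[of g] unfolding pi
    by (simp add: zero_less_divide_iff)
  have tau: "tau_x M X Tp Yp (xs g) = J / measure M K"
    unfolding tau_x_def condE_def J_def K_def Delta_def ..
  have dT: "condE M (cellS True g) Tf - condE M (cellS False g) Tf = IT / measure M (CX g)"
    unfolding dT_int IT_def ..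
  have dY: "condE M (cellS True g) Yf - condE M (cellS False g) Yf = ID / measure M (CX g)"
    unfolding dY_int ID_def ..
  show ?thesis
    unfolding dT dY pi tau s(2,3) using Kpos Xcell_pos[of g] s(1)
    by (simp add: field_simps power2_eq_square)
qed

end

context ivs begin

lemma mg_pos: "0 < m_g qv gv g" using group_sizes[of g] by linarith
lemma mg_less: "m_g qv gv g < n_g gv g" using group_sizes[of g] by linarith
lemma ng_pos: "0 < n_g gv g" using mg_pos[of g] mg_less[of g] by linarith

lemma cc_eq: "cc qv gv g = real (n_g gv g) * (real (m_g qv gv g) / real (n_g gv g) * (1 - real (m_g qv gv g) / real (n_g gv g)))"
  using ng_pos[of g] unfolding cc_def by (simp add: field_simps)

lemma Vt_nz: "real (m_g qv gv g) / real (n_g gv g) * (1 - real (m_g qv gv g) / real (n_g gv g)) \<noteq> 0"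
proof -
  have "real (m_g qv gv g) < real (n_g gv g)" using mg_less[of g] by simp
  then have "real (m_g qv gv g) / real (n_g gv g) < 1" using ng_pos[of g] by simp
  then show ?thesis using mg_pos[of g] ng_pos[of g] by simp
qed

lemma Pii_eq: "Pmat (Wmat gv) (Zmat qv gv) $ i $ i =
   (\<Sum>g\<in>UNIV. 1 / real (n_g gv g) * Wmat gv $ i $ g * (Zmat qv gv $ i $ g - real (m_g qv gv g) / real (n_g gv g))^2
      / (real (m_g qv gv g) / real (n_g gv g) * (1 - real (m_g qv gv g) / real (n_g gv g))))"
  unfolding P_sum[OF mg_pos mg_less]
proof (intro sum.cong refl)
  fix g
  show "Aent qv gv i g * Aent qv gv i g / cc qv gv g =
    1 / real (n_g gv g) * Wmat gv $ i $ g * (Zmat qv gv $ i $ g - real (m_g qv gv g) / real (n_g gv g))^2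
      / (real (m_g qv gv g) / real (n_g gv g) * (1 - real (m_g qv gv g) / real (n_g gv g)))"
    unfolding cc_eq using ng_pos[of g] Vt_nz[of g]
    by (cases "gv i = g") (simp_all add: Aent_def Wmat_def Zmat_def power2_eq_square)
qed

definition dd :: "('a \<Rightarrow> real) \<Rightarrow> 'g \<Rightarrow> real" where
  "dd F g = condE M (cellS True g) F - condE M (cellS False g) F"

lemma m_split: "condE M (cellS (qv i) (gv i)) F = condE M (cellS False (gv i)) F + (if qv i then dd F (gv i) else 0)"
  by (cases "qv i") (simp_all add: dd_def)

lemma quad_part:
  "(\<Sum>i\<in>UNIV. \<Sum>j\<in>UNIV. Pmat (Wmat gv) (Zmat qv gv)$i$j * condE M (cellS (qv i) (gv i)) Tf * condE M (cellS (qv j) (gv j)) F)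
   = (\<Sum>g\<in>UNIV. dd Tf g * dd F g * cc qv gv g)"
  unfolding m_split[of _ Tf] m_split[of _ F]
  by (rule quad[OF mg_pos mg_less])

lemma main:
  "(let n = real CARD('n);
          ng = (\<lambda>g. real (n_g gv g)); mg = (\<lambda>g. real (m_g qv gv g));
          Vt = (\<lambda>g. mg g / ng g * (1 - mg g / ng g));
          W = Wmat gv; Z = Zmat qv gv;
          Pii = (\<lambda>i. \<Sum>g\<in>UNIV. 1 / ng g * W $ i $ g * (Z $ i $ g - mg g / ng g)^2 / Vt g)
      in (\<forall>i. Pmat W Z $ i $ i = Pii i)
       \<and> beta_TSLS M Q X Tp Yp xs qv gv =
          ((\<Sum>g\<in>UNIV. ng g / n * (pi_x M X Tp (xs g))^2 * Vt g * tau_x M X Tp Yp (xs g))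
              + 1 / n * (\<Sum>i\<in>UNIV. E_u_eps M Q X Tp Yp xs qv gv i * Pii i))
          / ((\<Sum>g\<in>UNIV. ng g / n * (pi_x M X Tp (xs g))^2 * Vt g)
              + 1 / n * (\<Sum>i\<in>UNIV. E_u_sq M Q X Tp xs qv gv i * Pii i)))"
proof -
  define n where "n = real CARD('n)"
  have npos: "n > 0" unfolding n_def by simp
  define Pm where "Pm = Pmat (Wmat gv) (Zmat qv gv)"
  define Vt where "Vt = (\<lambda>g. real (m_g qv gv g) / real (n_g gv g) * (1 - real (m_g qv gv g) / real (n_g gv g)))"
  have ccV: "cc qv gv g = real (n_g gv g) * Vt g" for g unfolding Vt_def by (rule cc_eq)
  have Pii: "\<forall>i. Pm $ i $ i =
      (\<Sum>g\<in>UNIV. 1 / real (n_g gv g) * Wmat gv $ i $ g * (Zmat qv gv $ i $ g - real (m_g qv gv g) / real (n_g gv g))^2 / Vt g)"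
    unfolding Pm_def Vt_def using Pii_eq by blast
  define Num where "Num = (\<Sum>g\<in>UNIV. dd Tf g * dd Yf g * cc qv gv g) + (\<Sum>i\<in>UNIV. Pm$i$i * E_u_eps M Q X Tp Yp xs qv gv i)"
  define Den where "Den = (\<Sum>g\<in>UNIV. dd Tf g * dd Tf g * cc qv gv g) + (\<Sum>i\<in>UNIV. Pm$i$i * E_u_sq M Q X Tp xs qv gv i)"
  have num: "condE (SampM M) (QXevent M Q X xs qv gv) (\<lambda>\<omega>. Tvec Q Tp \<omega> \<bullet> (Pm *v Yvec Q Tp Yp \<omega>)) = Num"
    unfolding Tvec_def Yvec_def qf[OF Yf_int] quad_part[folded Pm_def] Num_def Eueps ..
  have den: "condE (SampM M) (QXevent M Q X xs qv gv) (\<lambda>\<omega>. Tvec Q Tp \<omega> \<bullet> (Pm *v Tvec Q Tp \<omega>)) = Den"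
    unfolding Tvec_def qf[OF Tf_int] quad_part[folded Pm_def] Den_def Eusq ..
  have beta: "beta_TSLS M Q X Tp Yp xs qv gv = Num / Den"
    unfolding beta_TSLS_def Let_def Pm_def[symmetric] num den ..
  have cm: "dd Tf g * dd Tf g = (pi_x M X Tp (xs g))^2" "dd Tf g * dd Yf g = (pi_x M X Tp (xs g))^2 * tau_x M X Tp Yp (xs g)" for g
    using cell_main[of g] unfolding dd_def by (simp_all add: power2_eq_square)
  have N2: "(\<Sum>g\<in>UNIV. real (n_g gv g) / n * (pi_x M X Tp (xs g))^2 * Vt g * tau_x M X Tp Yp (xs g))
      + 1 / n * (\<Sum>i\<in>UNIV. E_u_eps M Q X Tp Yp xs qv gv i * Pm $ i $ i) = Num / n"
    unfolding Num_def add_divide_distrib sum_divide_distrib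
    by (simp add: cm ccV sum_distrib_left field_simps)
  have D2: "(\<Sum>g\<in>UNIV. real (n_g gv g) / n * (pi_x M X Tp (xs g))^2 * Vt g)
      + 1 / n * (\<Sum>i\<in>UNIV. E_u_sq M Q X Tp xs qv gv i * Pm $ i $ i) = Den / n"
    unfolding Den_def add_divide_distrib sum_divide_distrib
    by (simp add: cm ccV sum_distrib_left field_simps)
  have final: "Num / Den = (Num / n) / (Den / n)" using npos by simp
  note Pii' = Pii[unfolded Vt_def]
  note N2' = N2[unfolded Vt_def]
  note D2' = D2[unfolded Vt_def]
  show ?thesis
    unfolding Let_def Pm_def[symmetric] n_def[symmetric]
    apply (intro conjI)
     apply (rule Pii')
    unfolding beta Pii'[rule_format, symmetric] N2' D2' final ..
qed

end

theorem lemma2: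
  fixes M :: "'a measure"
    and Q :: "'a \<Rightarrow> bool"
    and X :: "'a \<Rightarrow> 'x"
    and Tp :: "bool \<Rightarrow> 'a \<Rightarrow> bool"
    and Yp :: "bool \<Rightarrow> bool \<Rightarrow> 'a \<Rightarrow> real"
    and xs :: "'g::finite \<Rightarrow> 'x"
    and qv :: "'n::finite \<Rightarrow> bool"
    and gv :: "'n \<Rightarrow> 'g"
  assumes M: "prob_space M"
    and Q_meas: "Q \<in> M \<rightarrow>\<^sub>M count_space UNIV"
    and X_meas: "X \<in> M \<rightarrow>\<^sub>M count_space UNIV"
    and T_meas: "\<And>q. Tp q \<in> M \<rightarrow>\<^sub>M count_space UNIV"
    and Y_meas: "\<And>q t. Yp q t \<in> borel_measurable M"
    and Y_sq_int: "\<And>q t. integrable M (\<lambda>\<omega>. (Yp q t \<omega>)^2)"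
    and xs_inj: "inj xs"
    and X_range: "\<And>\<omega>. \<omega> \<in> space M \<Longrightarrow> X \<omega> \<in> range xs"
    and independence: "\<And>q t g. measure M (Xcell M X (xs g)) > 0 \<Longrightarrow>
        prob_space.indep_set (uniform_measure M (Xcell M X (xs g)))
          {(\<lambda>\<omega>. (Yp q t \<omega>, Tp q \<omega>)) -` A \<inter> space M | A. A \<in> sets (borel \<Otimes>\<^sub>M count_space UNIV)}
          {Q -` B \<inter> space M | B. B \<in> sets (count_space UNIV)}"
    and exclusion: "\<And>t g. measure M (Xcell M X (xs g)) > 0 \<Longrightarrow>
        condP M (Xcell M X (xs g)) {\<omega> \<in> space M. Yp True t \<omega> = Yp False t \<omega>} = 1"
    and relevance: "\<And>g. measure M (Xcell M X (xs g)) > 0 \<Longrightarrow> pi_x M X Tp (xs g) > 0"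
    and monotonicity:
      "(\<forall>g. measure M (Xcell M X (xs g)) > 0 \<longrightarrow>
            condP M (Xcell M X (xs g)) {\<omega> \<in> space M. Tp True \<omega> \<ge> Tp False \<omega>} = 1)
     \<or> (\<forall>g. measure M (Xcell M X (xs g)) > 0 \<longrightarrow>
            condP M (Xcell M X (xs g)) {\<omega> \<in> space M. Tp True \<omega> \<le> Tp False \<omega>} = 1)"
    and realized: "measure (SampM M) (QXevent M Q X xs qv gv) > 0"
    and group_sizes: "\<And>g. m_g qv gv g \<ge> 2 \<and> n_g gv g - m_g qv gv g \<ge> 2"
  shows
    "(let n = real CARD('n);
          ng = (\<lambda>g. real (n_g gv g)); mg = (\<lambda>g. real (m_g qv gv g));
          Vt = (\<lambda>g. mg g / ng g * (1 - mg g / ng g));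
          W = Wmat gv; Z = Zmat qv gv;
          Pii = (\<lambda>i. \<Sum>g\<in>UNIV. 1 / ng g * W $ i $ g * (Z $ i $ g - mg g / ng g)^2 / Vt g)
      in (\<forall>i. Pmat W Z $ i $ i = Pii i)
       \<and> beta_TSLS M Q X Tp Yp xs qv gv =
          ((\<Sum>g\<in>UNIV. ng g / n * (pi_x M X Tp (xs g))^2 * Vt g * tau_x M X Tp Yp (xs g))
              + 1 / n * (\<Sum>i\<in>UNIV. E_u_eps M Q X Tp Yp xs qv gv i * Pii i))
          / ((\<Sum>g\<in>UNIV. ng g / n * (pi_x M X Tp (xs g))^2 * Vt g)
              + 1 / n * (\<Sum>i\<in>UNIV. E_u_sq M Q X Tp xs qv gv i * Pii i)))"
proof -
  interpret ivs M Q X Tp Yp xs qv gv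
    by (rule ivs.intro) (fact assms)+
  show ?thesis by (rule main)
qed

end
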